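(* Let $\lambda$ be a partition with $n$ parts and let $\beta \in U_\lambda(n)$. If $\beta \in UGC_\lambda(n) \cap UBP_\lambda(n)$, then $s_\lambda(\beta;x) = \det\big( h_{\lambda_j - j + i}(i, \beta_j; x) \big)_{i,j=1}^n$, the $n\times n$ determinant whose $(i,j)$ entry is $h_{\lambda_j - j + i}(i,\beta_j;x)$.
   Context: Fix an integer $n \geq 1$ and write $[k] = \{1,\dots,k\}$. A partition is $\lambda = (\lambda_1,\dots,\lambda_n)$ with $\lambda_1 \geq \dots \geq \lambda_n \geq 0$ integers. Let $R_\lambda \subseteq [n-1]$ be the set of $q \in [n-1]$ with $\lambda_q > \lambda_{q+1}$; write its elements $q_1 < \dots < q_r$, and set $q_0 := 0$, $q_{r+1} := n$. For $h \in [r+1]$ the $h$-th carrel is the index interval $\{q_{h-1}+1,\dots,q_h\}$. A $\lambda$-tuple is an $n$-tuple $\beta$ with entries in $[n]$, considered with this carrel structure; it is upper if $\beta_i \geq i$ for all $i$. $U_\lambda(n)$ is the set of upper $\lambda$-tuples, ordered entrywise. Critical indices: for $\beta \in U_\lambda(n)$ and $h \in [r+1]$, set $x_1 := q_h$; given $x_{u-1}$, if some index $x$ with $q_{h-1} < x < x_{u-1}$ satisfies $\beta_{x_{u-1}} - \beta_x > x_{u-1} - x$, let $x_u$ be the largest such $x$, otherwise stop. The $x_u$ are the critical indices of $\beta$ in carrel $h$; the pairs $(x_u,\beta_{x_u})$ form its critical list. For $i \in [n]$ let $x(i)$ be the smallest critical index in the carrel of $i$ with $x(i) \geq i$. The $\lambda$-platform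 is $\Xi_\lambda(\beta) := \xi$ with $\xi_i := \beta_{x(i)}$. The critical list is a flag critical list if for every $h \in [r]$, $\beta_{q_h} \leq \beta_k$ where $k$ is the smallest critical index of $\beta$ in carrel $h+1$. $UGC_\lambda(n)$ is the set of $\beta \in U_\lambda(n)$ with flag critical list; $UBP_\lambda(n)$ is the set of $\beta \in U_\lambda(n)$ with $\beta \leq \Xi_\lambda(\beta)$ entrywise. A semistandard tableau of shape $\lambda$ is a filling of the Young diagram of $\lambda$ (row $i$ has $\lambda_i$ boxes, left justified) with values in $[n]$, weakly increasing left to right along rows and strictly increasing top to bottom down columns. For $\beta \in U_\lambda(n)$, the row bound sum is $s_\lambda(\beta;x) := \sum_T \prod_{k=1}^n x_k^{\theta_k(T)}$, summed over the semistandard tableaux $T$ of shape $\lambda$ all of whose values in row $i$ are at most $\beta_i$ (for every $i$), where $\theta_k(T)$ is the number of values of $T$ equal to $k$. For integers $u$, $i \geq 1$, $k \geq 1$: $h_u(i,k;x) := 0$ if $u < 0$, and otherwise $h_u(i,k;x) := \sum x_{t_1}\cdots x_{t_u}$ summed over $i \leq t_1 \leq \dots \leq t_u \leq k$ (so $h_0 = 1$). *)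

theory Defs
  imports Main "Jordan_Normal_Form.Determinant"
begin

(* Conventions: tuples/partitions are functions nat => nat, meaningful on indices 1..n. *)

definition is_partition :: "nat \<Rightarrow> (nat \<Rightarrow> nat) \<Rightarrow> bool" where
  "is_partition n lam \<longleftrightarrow> (\<forall>i. 1 \<le> i \<and> i < n \<longrightarrow> lam (i+1) \<le> lam i)"

definition Rset :: "nat \<Rightarrow> (nat \<Rightarrow> nat) \<Rightarrow> nat set" where
  "Rset n lam = {q. 1 \<le> q \<and> q \<le> n - 1 \<and> lam q > lam (q+1)}"

definition qq :: "nat \<Rightarrow> (nat \<Rightarrow> nat) \<Rightarrow> nat \<Rightarrow> nat" where
  "qq n lam h = sorted_list_of_set (Rset n lam \<union> {0, n}) ! h"

definition rr :: "nat \<Rightarrow> (nat \<Rightarrow> nat) \<Rightarrow> nat" where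
  "rr n lam = card (Rset n lam)"

definition carrel_of :: "nat \<Rightarrow> (nat \<Rightarrow> nat) \<Rightarrow> nat \<Rightarrow> nat" where
  "carrel_of n lam i = (THE h. 1 \<le> h \<and> h \<le> rr n lam + 1 \<and> qq n lam (h-1) < i \<and> i \<le> qq n lam h)"

definition upper_tuple :: "nat \<Rightarrow> (nat \<Rightarrow> nat) \<Rightarrow> bool" where
  "upper_tuple n \<beta> \<longleftrightarrow> (\<forall>i. 1 \<le> i \<and> i \<le> n \<longrightarrow> i \<le> \<beta> i \<and> \<beta> i \<le> n)"

definition jump :: "(nat \<Rightarrow> nat) \<Rightarrow> nat \<Rightarrow> nat \<Rightarrow> bool" where
  "jump \<beta> y x \<longleftrightarrow> int (\<beta> y) - int (\<beta> x) > int y - int x"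

inductive is_crit :: "nat \<Rightarrow> nat \<Rightarrow> (nat \<Rightarrow> nat) \<Rightarrow> nat \<Rightarrow> bool"
  for lo hi \<beta> where
  start: "is_crit lo hi \<beta> hi"
| step: "\<lbrakk> is_crit lo hi \<beta> y; lo < x; x < y; jump \<beta> y x;
           \<forall>x'. lo < x' \<and> x' < y \<and> jump \<beta> y x' \<longrightarrow> x' \<le> x \<rbrakk> \<Longrightarrow> is_crit lo hi \<beta> x"

definition crit_in :: "nat \<Rightarrow> (nat \<Rightarrow> nat) \<Rightarrow> (nat \<Rightarrow> nat) \<Rightarrow> nat \<Rightarrow> nat \<Rightarrow> bool" where
  "crit_in n lam \<beta> h x \<longleftrightarrow> is_crit (qq n lam (h-1)) (qq n lam h) \<beta> x"

definition xcrit :: "nat \<Rightarrow> (nat \<Rightarrow> nat) \<Rightarrow> (nat \<Rightarrow> nat) \<Rightarrow> nat \<Rightarrow> nat" where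
  "xcrit n lam \<beta> i = (LEAST x. crit_in n lam \<beta> (carrel_of n lam i) x \<and> i \<le> x)"

definition platform :: "nat \<Rightarrow> (nat \<Rightarrow> nat) \<Rightarrow> (nat \<Rightarrow> nat) \<Rightarrow> nat \<Rightarrow> nat" where
  "platform n lam \<beta> i = \<beta> (xcrit n lam \<beta> i)"

definition flag_critical :: "nat \<Rightarrow> (nat \<Rightarrow> nat) \<Rightarrow> (nat \<Rightarrow> nat) \<Rightarrow> bool" where
  "flag_critical n lam \<beta> \<longleftrightarrow>
     (\<forall>h. 1 \<le> h \<and> h \<le> rr n lam \<longrightarrow>
        \<beta> (qq n lam h) \<le> \<beta> (LEAST x. crit_in n lam \<beta> (h+1) x))"

definition UGC :: "nat \<Rightarrow> (nat \<Rightarrow> nat) \<Rightarrow> (nat \<Rightarrow> nat) set" where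
  "UGC n lam = {\<beta>. upper_tuple n \<beta> \<and> flag_critical n lam \<beta>}"

definition UBP :: "nat \<Rightarrow> (nat \<Rightarrow> nat) \<Rightarrow> (nat \<Rightarrow> nat) set" where
  "UBP n lam = {\<beta>. upper_tuple n \<beta> \<and> (\<forall>i. 1 \<le> i \<and> i \<le> n \<longrightarrow> \<beta> i \<le> platform n lam \<beta> i)}"

definition in_shape :: "nat \<Rightarrow> (nat \<Rightarrow> nat) \<Rightarrow> nat \<Rightarrow> nat \<Rightarrow> bool" where
  "in_shape n lam i j \<longleftrightarrow> 1 \<le> i \<and> i \<le> n \<and> 1 \<le> j \<and> j \<le> lam i"

definition SSYT :: "nat \<Rightarrow> (nat \<Rightarrow> nat) \<Rightarrow> (nat \<Rightarrow> nat \<Rightarrow> nat) set" where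
  "SSYT n lam = {T. (\<forall>i j. \<not> in_shape n lam i j \<longrightarrow> T i j = 0)
      \<and> (\<forall>i j. in_shape n lam i j \<longrightarrow> 1 \<le> T i j \<and> T i j \<le> n)
      \<and> (\<forall>i j. in_shape n lam i j \<and> in_shape n lam i (j+1) \<longrightarrow> T i j \<le> T i (j+1))
      \<and> (\<forall>i j. in_shape n lam i j \<and> in_shape n lam (i+1) j \<longrightarrow> T i j < T (i+1) j)}"

definition theta :: "nat \<Rightarrow> (nat \<Rightarrow> nat) \<Rightarrow> (nat \<Rightarrow> nat \<Rightarrow> nat) \<Rightarrow> nat \<Rightarrow> nat" where
  "theta n lam T k = card {(i, j). in_shape n lam i j \<and> T i j = k}"

definition row_bound_sum :: "nat \<Rightarrow> (nat \<Rightarrow> nat) \<Rightarrow> (nat \<Rightarrow> nat) \<Rightarrow> (nat \<Rightarrow> 'a::comm_ring_1) \<Rightarrow> 'a" where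
  "row_bound_sum n lam \<beta> x =
     (\<Sum>T \<in> {T \<in> SSYT n lam. \<forall>i j. in_shape n lam i j \<longrightarrow> T i j \<le> \<beta> i}.
        \<Prod>k = 1..n. x k ^ theta n lam T k)"

definition hcomp :: "int \<Rightarrow> nat \<Rightarrow> nat \<Rightarrow> (nat \<Rightarrow> 'a::comm_ring_1) \<Rightarrow> 'a" where
  "hcomp u i k x = (if u < 0 then 0 else
     (\<Sum>t \<in> {t. (\<forall>a. a \<notin> {1..nat u} \<longrightarrow> t a = 0)
               \<and> (\<forall>a \<in> {1..nat u}. i \<le> t a \<and> t a \<le> k)
               \<and> (\<forall>a. 1 \<le> a \<and> a < nat u \<longrightarrow> t a \<le> t (a+1))}.
        \<Prod>a = 1..nat u. x (t a)))"

end

theory Submission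
  imports Defs
begin


lemma fin_funs:
  assumes "finite A"
  shows "finite {t :: nat \<Rightarrow> nat. (\<forall>a. a \<notin> A \<longrightarrow> t a = d a) \<and> (\<forall>a\<in>A. t a \<le> K)}"
proof -
  have "{t :: nat \<Rightarrow> nat. (\<forall>a. a \<notin> A \<longrightarrow> t a = d a) \<and> (\<forall>a\<in>A. t a \<le> K)}
        \<subseteq> (\<lambda>f a. if a \<in> A then f a else d a) ` (A \<rightarrow>\<^sub>E {0..K})"
  proof
    fix t assume t: "t \<in> {t :: nat \<Rightarrow> nat. (\<forall>a. a \<notin> A \<longrightarrow> t a = d a) \<and> (\<forall>a\<in>A. t a \<le> K)}"
    show "t \<in> (\<lambda>f a. if a \<in> A then f a else d a) ` (A \<rightarrow>\<^sub>E {0..K})"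
      by (rule image_eqI[where x="restrict t A"]) (use t in auto)
  qed
  moreover have "finite ((\<lambda>f a. if a \<in> A then f a else d a) ` (A \<rightarrow>\<^sub>E {0..K}))"
    using assms by (intro finite_imageI finite_PiE) auto
  ultimately show ?thesis by (rule finite_subset)
qed

lemma fin_funs2:
  assumes "finite A" "finite B"
  shows "finite {T :: nat \<Rightarrow> nat \<Rightarrow> nat. (\<forall>i j. (i \<notin> A \<or> j \<notin> B) \<longrightarrow> T i j = 0) \<and> (\<forall>i j. T i j \<le> K)}"
proof -
  have "{T :: nat \<Rightarrow> nat \<Rightarrow> nat. (\<forall>i j. (i \<notin> A \<or> j \<notin> B) \<longrightarrow> T i j = 0) \<and> (\<forall>i j. T i j \<le> K)}
        \<subseteq> (\<lambda>f i j. if i \<in> A \<and> j \<in> B then f (i,j) else 0) ` (A \<times> B \<rightarrow>\<^sub>E {0..K})"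
  proof
    fix T assume t: "T \<in> {T :: nat \<Rightarrow> nat \<Rightarrow> nat. (\<forall>i j. (i \<notin> A \<or> j \<notin> B) \<longrightarrow> T i j = 0) \<and> (\<forall>i j. T i j \<le> K)}"
    show "T \<in> (\<lambda>f i j. if i \<in> A \<and> j \<in> B then f (i,j) else 0) ` (A \<times> B \<rightarrow>\<^sub>E {0..K})"
      by (rule image_eqI[where x="restrict (\<lambda>(i,j). T i j) (A \<times> B)"]) (use t in \<open>auto simp: fun_eq_iff\<close>)
  qed
  moreover have "finite ((\<lambda>f i j. if i \<in> A \<and> j \<in> B then f (i,j) else 0) ` (A \<times> B \<rightarrow>\<^sub>E {0..K}))"
    using assms by (intro finite_imageI finite_PiE) auto
  ultimately show ?thesis by (rule finite_subset)
qed

section \<open>Determinant lemmas\<close>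

lemma prod_split_col:
  assumes "\<sigma> permutes {0..<n}" "p < n"
  shows "(\<Prod>j<n. mat n n (\<lambda>(i,j). F i j) $$ (\<sigma> j, j)) = F (\<sigma> p) p * (\<Prod>j\<in>{..<n}-{p}. F (\<sigma> j) j)"
proof -
  have s: "\<And>j. j < n \<Longrightarrow> \<sigma> j < n" using assms(1) permutes_in_image by fastforce
  have "(\<Prod>j<n. mat n n (\<lambda>(i,j). F i j) $$ (\<sigma> j, j)) = (\<Prod>j<n. F (\<sigma> j) j)"
    by (rule prod.cong) (auto simp: s)
  also have "\<dots> = F (\<sigma> p) p * (\<Prod>j\<in>{..<n}-{p}. F (\<sigma> j) j)"
    using assms(2) by (subst prod.remove[of _ p]) auto
  finally show ?thesis .
qed

lemma det_col_lin:
  fixes F :: "nat \<Rightarrow> nat \<Rightarrow> 'a::comm_ring_1"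
  assumes S: "finite S" and p: "p < n"
  shows "det (mat n n (\<lambda>(i,j). if j = p then (\<Sum>s\<in>S. c s * g s i) else F i j))
       = (\<Sum>s\<in>S. c s * det (mat n n (\<lambda>(i,j). if j = p then g s i else F i j)))"
proof -
  let ?P = "{\<sigma>. \<sigma> permutes {0..<n}}"
  let ?R = "\<lambda>\<sigma>. (\<Prod>j\<in>{..<n}-{p}. F (\<sigma> j) j)"
  have R: "\<And>G \<sigma>. (\<Prod>j\<in>{..<n}-{p}. (\<lambda>i j. if j = p then G i else F i j) (\<sigma> j) j) = ?R \<sigma>"
    by (rule prod.cong) auto
  have "det (mat n n (\<lambda>(i,j). if j = p then (\<Sum>s\<in>S. c s * g s i) else F i j))
      = (\<Sum>\<sigma>\<in>?P. signof \<sigma> * ((\<Sum>s\<in>S. c s * g s (\<sigma> p)) * ?R \<sigma>))"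
    apply (subst det_col[of _ n], simp)
    apply (rule sum.cong, simp)
    apply (subst prod_split_col[of _ n p "\<lambda>i j. if j = p then (\<Sum>s\<in>S. c s * g s i) else F i j"])
    using p R[of "\<lambda>i. (\<Sum>s\<in>S. c s * g s i)"] by auto
  also have "\<dots> = (\<Sum>\<sigma>\<in>?P. \<Sum>s\<in>S. c s * (signof \<sigma> * (g s (\<sigma> p) * ?R \<sigma>)))"
    by (rule sum.cong) (auto simp: sum_distrib_left sum_distrib_right ac_simps)
  also have "\<dots> = (\<Sum>s\<in>S. c s * (\<Sum>\<sigma>\<in>?P. signof \<sigma> * (g s (\<sigma> p) * ?R \<sigma>)))"
    by (subst sum.swap) (simp add: sum_distrib_left)
  also have "\<dots> = (\<Sum>s\<in>S. c s * det (mat n n (\<lambda>(i,j). if j = p then g s i else F i j)))"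
    apply (rule sum.cong, simp)
    apply (subst det_col[of _ n], simp)
    apply (rule arg_cong[where f="\<lambda>z. _ * z"])
    apply (rule sum.cong, simp)
    apply (subst prod_split_col[of _ n p "\<lambda>i j. if j = p then g _ i else F i j"])
    using p R by auto
  finally show ?thesis .
qed

lemma det_ident_cols:
  fixes F :: "nat \<Rightarrow> nat \<Rightarrow> 'a::comm_ring_1"
  assumes "a < n" "b < n" "a \<noteq> b" "\<And>i. i < n \<Longrightarrow> F i a = F i b"
  shows "det (mat n n (\<lambda>(i,j). F i j)) = 0"
  by (rule det_identical_columns[of _ n a b]) (use assms in \<open>auto intro!: eq_vecI\<close>)

lemma det_zero_row:
  fixes F :: "nat \<Rightarrow> nat \<Rightarrow> 'a::comm_ring_1"
  assumes "k < n" "\<And>j. j < n \<Longrightarrow> F k j = 0"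
  shows "det (mat n n (\<lambda>(i,j). F i j)) = 0"
proof -
  have "\<And>\<sigma>. \<sigma> permutes {0..<n} \<Longrightarrow> (\<Prod>i = 0..<n. mat n n (\<lambda>(i,j). F i j) $$ (i, \<sigma> i)) = 0"
  proof -
    fix \<sigma> assume s: "\<sigma> permutes {0..<n}"
    have "\<sigma> k < n" using s assms(1) permutes_in_image by fastforce
    thus "(\<Prod>i = 0..<n. mat n n (\<lambda>(i,j). F i j) $$ (i, \<sigma> i)) = 0"
      using assms by (intro prod_zero bexI[of _ k]) auto
  qed
  thus ?thesis by (subst det_def'[of _ n]) auto
qed

lemma det_zero_col:
  fixes F :: "nat \<Rightarrow> nat \<Rightarrow> 'a::comm_ring_1"
  assumes "k < n" "\<And>i. i < n \<Longrightarrow> F i k = 0"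
  shows "det (mat n n (\<lambda>(i,j). F i j)) = 0"
proof -
  have "\<And>\<sigma>. \<sigma> permutes {0..<n} \<Longrightarrow> (\<Prod>j<n. mat n n (\<lambda>(i,j). F i j) $$ (\<sigma> j, j)) = 0"
  proof -
    fix \<sigma> assume s: "\<sigma> permutes {0..<n}"
    show "(\<Prod>j<n. mat n n (\<lambda>(i,j). F i j) $$ (\<sigma> j, j)) = 0"
      using prod_split_col[OF s assms(1), of F] assms s permutes_in_image by fastforce
  qed
  thus ?thesis by (subst det_col[of _ n]) auto
qed

lemma det_last_row:
  fixes F :: "nat \<Rightarrow> nat \<Rightarrow> 'a::comm_ring_1"
  assumes "n = Suc m" "\<And>j. j < n \<Longrightarrow> F m j = (if j = m then 1 else 0)"
  shows "det (mat n n (\<lambda>(i,j). F i j)) = det (mat m m (\<lambda>(i,j). F i j))"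
proof -
  let ?A = "mat n n (\<lambda>(i,j). F i j)"
  have "det ?A = (\<Sum>j<n. ?A $$ (m,j) * cofactor ?A m j)"
    by (rule laplace_expansion_row) (use assms in auto)
  also have "\<dots> = ?A $$ (m,m) * cofactor ?A m m"
    apply (subst sum.remove[of _ m]) using assms by auto
  also have "\<dots> = det (mat_delete ?A m m)"
    using assms by (simp add: cofactor_def)
  also have "mat_delete ?A m m = mat m m (\<lambda>(i,j). F i j)"
    using assms by (intro eq_matI) (auto simp: mat_delete_def)
  finally show ?thesis .
qed

section \<open>Complete homogeneous\<close>

definition hset :: "nat \<Rightarrow> nat \<Rightarrow> nat \<Rightarrow> (nat \<Rightarrow> nat) set" where
  "hset N i k = {t. (\<forall>a. a \<notin> {1..N} \<longrightarrow> t a = 0)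
               \<and> (\<forall>a \<in> {1..N}. i \<le> t a \<and> t a \<le> k)
               \<and> (\<forall>a. 1 \<le> a \<and> a < N \<longrightarrow> t a \<le> t (a+1))}"

lemma hcomp_alt: "u \<ge> 0 \<Longrightarrow> hcomp u i k x = (\<Sum>t\<in>hset (nat u) i k. \<Prod>a = 1..nat u. x (t a))"
  unfolding hcomp_def hset_def by simp

lemma hcomp_neg[simp]: "u < 0 \<Longrightarrow> hcomp u i k x = 0"
  unfolding hcomp_def by simp

lemma hcomp_zero[simp]: "hcomp 0 i k x = 1"
proof -
  have "hset 0 i k = {\<lambda>_. 0}" unfolding hset_def by auto
  thus ?thesis by (simp add: hcomp_alt)
qed

lemma hcomp_empty: "u > 0 \<Longrightarrow> k < i \<Longrightarrow> hcomp u i k x = 0"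
proof -
  assume "u > 0" "k < i"
  hence "hset (nat u) i k = {}" unfolding hset_def by force
  thus ?thesis using \<open>u > 0\<close> by (simp add: hcomp_alt)
qed

lemma hset_finite: "finite (hset N i k)"
  by (rule finite_subset[OF _ fin_funs[of "{1..N}" "\<lambda>_. 0" k]]) (auto simp: hset_def)

lemma chain_mono:
  assumes "\<forall>a. 1 \<le> a \<and> a < N \<longrightarrow> (t::nat\<Rightarrow>nat) a \<le> t (a+1)" "1 \<le> a" "a \<le> b" "b \<le> N"
  shows "t a \<le> t b"
  using assms(3,4)
proof (induction b)
  case 0 thus ?case using assms(2) by simp
next
  case (Suc b)
  show ?case
  proof (cases "a = Suc b")
    case False
    hence "t a \<le> t b" using Suc by simp
    also have "t b \<le> t (Suc b)" using assms(1) Suc False assms(2) by force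
    finally show ?thesis .
  qed simp
qed

lemma hcomp_rec_nat:
  fixes x :: "nat \<Rightarrow> 'a::comm_ring_1"
  assumes "i \<le> Suc k" "N > 0"
  shows "(\<Sum>t\<in>hset N i (Suc k). \<Prod>a = 1..N. x (t a))
       = (\<Sum>t\<in>hset N i k. \<Prod>a = 1..N. x (t a)) + x (Suc k) * (\<Sum>t\<in>hset (N-1) i (Suc k). \<Prod>a = 1..N-1. x (t a))"
proof -
  let ?B = "{t\<in>hset N i (Suc k). t N = Suc k}"
  have sub: "hset N i k \<subseteq> hset N i (Suc k)" unfolding hset_def by auto
  have diff: "hset N i (Suc k) - hset N i k = ?B"
  proof (rule equalityI; rule subsetI)
    fix t assume t: "t \<in> hset N i (Suc k) - hset N i k"
    show "t \<in> ?B"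
    proof (rule ccontr)
      assume "t \<notin> ?B"
      have tS: "t \<in> hset N i (Suc k)" using t by blast
      have "N \<in> {1..N}" using assms(2) by auto
      hence "t N \<le> Suc k" using tS unfolding hset_def by blast
      moreover have "t N \<noteq> Suc k" using \<open>t \<notin> ?B\<close> tS by blast
      ultimately have tN: "t N \<le> k" by simp
      have ch: "\<forall>a. 1 \<le> a \<and> a < N \<longrightarrow> t a \<le> t (a+1)" using t unfolding hset_def by blast
      have "\<forall>a\<in>{1..N}. t a \<le> k"
      proof
        fix a assume a: "a \<in> {1..N}"
        have "t a \<le> t N" by (rule chain_mono[OF ch]) (use a in auto)
        thus "t a \<le> k" using tN by simp
      qed
      hence "t \<in> hset N i k" using tS unfolding hset_def by blast
      thus False using t by blast
    qed
  next
    fix t assume tB: "t \<in> ?B"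
    have "N \<in> {1..N}" using assms(2) by auto
    hence "t \<notin> hset N i k" using tB unfolding hset_def by fastforce
    thus "t \<in> hset N i (Suc k) - hset N i k" using tB by blast
  qed
  have "(\<Sum>t\<in>hset N i (Suc k). \<Prod>a = 1..N. x (t a))
      = (\<Sum>t\<in>hset N i k. \<Prod>a = 1..N. x (t a)) + (\<Sum>t\<in>?B. \<Prod>a = 1..N. x (t a))"
    using sum.subset_diff[OF sub hset_finite, of "\<lambda>t. \<Prod>a = 1..N. x (t a)"] diff by (simp add: add.commute)
  moreover have "(\<Sum>t\<in>?B. \<Prod>a = 1..N. x (t a)) = (\<Sum>t\<in>hset (N-1) i (Suc k). x (Suc k) * (\<Prod>a = 1..N-1. x (t a)))"
  proof (rule sum.reindex_bij_witness[where i="\<lambda>s. s(N := Suc k)" and j="\<lambda>t. t(N := 0)"])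
    fix t assume t: "t \<in> ?B"
    have tN: "t N = Suc k" using t by blast
    show "(t(N := 0))(N := Suc k) = t" using tN by (metis fun_upd_triv fun_upd_upd)
    have t1: "\<And>a. a \<notin> {1..N} \<Longrightarrow> t a = 0" and t2: "\<And>a. a \<in> {1..N} \<Longrightarrow> i \<le> t a \<and> t a \<le> Suc k"
      and t3: "\<And>a. 1 \<le> a \<Longrightarrow> a < N \<Longrightarrow> t a \<le> t (a+1)" using t unfolding hset_def by blast+
    have A: "\<forall>a. a \<notin> {1..N-1} \<longrightarrow> (t(N := 0)) a = 0" using t1 by auto
    have B: "\<forall>a \<in> {1..N-1}. i \<le> (t(N := 0)) a \<and> (t(N := 0)) a \<le> Suc k" using t2 by auto
    have C: "\<forall>a. 1 \<le> a \<and> a < N-1 \<longrightarrow> (t(N := 0)) a \<le> (t(N := 0)) (a+1)" using t3 by auto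
    show "t(N := 0) \<in> hset (N-1) i (Suc k)" using A B C unfolding hset_def by blast
    have "(\<Prod>a = 1..N. x (t a)) = x (t N) * (\<Prod>a = 1..N-1. x (t a))"
    proof -
      obtain M where M: "N = Suc M" using assms(2) by (cases N) auto
      show ?thesis unfolding M by (simp add: prod.cl_ivl_Suc mult.commute)
    qed
    also have "(\<Prod>a = 1..N-1. x (t a)) = (\<Prod>a = 1..N-1. x ((t(N:=0)) a))" by (rule prod.cong) auto
    finally show "x (Suc k) * (\<Prod>a = 1..N-1. x ((t(N := 0)) a)) = (\<Prod>a = 1..N. x (t a))" using t by simp
  next
    fix s assume s: "s \<in> hset (N-1) i (Suc k)"
    have "N \<notin> {1..N-1}" using assms(2) by auto
    hence sN: "s N = 0" using s unfolding hset_def by blast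
    show "(s(N := Suc k))(N := 0) = s" using sN by (metis fun_upd_triv fun_upd_upd)
    have s1: "\<And>a. a \<notin> {1..N-1} \<Longrightarrow> s a = 0" and s2: "\<And>a. a \<in> {1..N-1} \<Longrightarrow> i \<le> s a \<and> s a \<le> Suc k"
      and s3: "\<And>a. 1 \<le> a \<Longrightarrow> a < N - 1 \<Longrightarrow> s a \<le> s (a+1)" using s unfolding hset_def by blast+
    have A: "\<forall>a. a \<notin> {1..N} \<longrightarrow> (s(N := Suc k)) a = 0"
      using s1 assms(2) by auto
    have B: "\<forall>a \<in> {1..N}. i \<le> (s(N := Suc k)) a \<and> (s(N := Suc k)) a \<le> Suc k"
    proof
      fix a assume a: "a \<in> {1..N}"
      show "i \<le> (s(N := Suc k)) a \<and> (s(N := Suc k)) a \<le> Suc k"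
      proof (cases "a = N")
        case False thus ?thesis using a s2[of a] by auto
      qed (use assms in simp)
    qed
    have C: "\<forall>a. 1 \<le> a \<and> a < N \<longrightarrow> (s(N := Suc k)) a \<le> (s(N := Suc k)) (a+1)"
    proof (intro allI impI)
      fix a assume a: "1 \<le> a \<and> a < N"
      show "(s(N := Suc k)) a \<le> (s(N := Suc k)) (a+1)"
      proof (cases "a + 1 = N")
        case True thus ?thesis using a s2[of a] by auto
      next
        case False thus ?thesis using a s3[of a] by auto
      qed
    qed
    have "s(N := Suc k) \<in> hset N i (Suc k)" using A B C unfolding hset_def by blast
    thus "s(N := Suc k) \<in> ?B" by simp
  qed
  moreover have "(\<Sum>t\<in>hset (N-1) i (Suc k). x (Suc k) * (\<Prod>a = 1..N-1. x (t a)))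
      = x (Suc k) * (\<Sum>t\<in>hset (N-1) i (Suc k). \<Prod>a = 1..N-1. x (t a))"
    by (rule sum_distrib_left[symmetric])
  ultimately show ?thesis by simp
qed

lemma hcomp_rec:
  assumes "i \<le> Suc k"
  shows "hcomp u i (Suc k) x = hcomp u i k x + x (Suc k) * hcomp (u - 1) i (Suc k) x"
proof (cases "u > 0")
  case True
  have "nat (u - 1) = nat u - 1" by simp
  thus ?thesis using True hcomp_rec_nat[OF assms, of "nat u" x]
    by (simp add: hcomp_alt)
next
  case False
  thus ?thesis by (cases "u = 0") auto
qed




definition hmat :: "nat \<Rightarrow> (nat \<Rightarrow> int) \<Rightarrow> (nat \<Rightarrow> nat) \<Rightarrow> (nat \<Rightarrow> 'a::comm_ring_1) \<Rightarrow> 'a" where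
  "hmat n c b x = det (mat n n (\<lambda>(i,j). hcomp (c (j+1) + int (i+1)) (i+1) (b (j+1)) x))"

lemma hmat_cong:
  assumes "\<And>j. 1 \<le> j \<Longrightarrow> j \<le> n \<Longrightarrow> c j = c' j \<and> b j = b' j"
  shows "hmat n c b x = hmat n c' b' x"
proof -
  have "mat n n (\<lambda>(i,j). hcomp (c (j+1) + int (i+1)) (i+1) (b (j+1)) x)
      = mat n n (\<lambda>(i,j). hcomp (c' (j+1) + int (i+1)) (i+1) (b' (j+1)) x)"
    using assms by (intro eq_matI) auto
  thus ?thesis unfolding hmat_def by simp
qed

lemma hcomp_expand:
  fixes x :: "nat \<Rightarrow> 'a::comm_ring_1"
  assumes "i \<le> Suc m"
  shows "hcomp u i (Suc m) x = (\<Sum>t<d. x (Suc m) ^ t * hcomp (u - int t) i m x) + x (Suc m) ^ d * hcomp (u - int d) i (Suc m) x"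
proof (induction d)
  case 0 thus ?case by simp
next
  case (Suc d)
  have "hcomp (u - int d) i (Suc m) x = hcomp (u - int d) i m x + x (Suc m) * hcomp (u - int d - 1) i (Suc m) x"
    by (rule hcomp_rec[OF assms])
  hence "x (Suc m) ^ d * hcomp (u - int d) i (Suc m) x
       = x (Suc m) ^ d * hcomp (u - int d) i m x + x (Suc m) ^ Suc d * hcomp (u - int (Suc d)) i (Suc m) x"
    by (simp add: algebra_simps)
  thus ?case using Suc by simp
qed

lemma expand_col:
  fixes x :: "nat \<Rightarrow> 'a::comm_ring_1" and F :: "nat \<Rightarrow> nat \<Rightarrow> 'a"
  assumes n: "n = Suc m" and pn: "p < n"
    and Z: "det (mat n n (\<lambda>(i,j). if j = p then hcomp (c0 - int d + int (i+1)) (i+1) n x else F i j)) = 0"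
  shows "det (mat n n (\<lambda>(i,j). if j = p then hcomp (c0 + int (i+1)) (i+1) n x else F i j))
       = (\<Sum>t<d. x n ^ t * det (mat n n (\<lambda>(i,j). if j = p then hcomp (c0 - int t + int (i+1)) (i+1) m x else F i j)))"
proof -
  define g where "g t i = (if t < d then hcomp (c0 + int (i+1) - int t) (i+1) m x else hcomp (c0 + int (i+1) - int d) (i+1) n x)" for t i
  have col: "\<And>i. i < n \<Longrightarrow> hcomp (c0 + int (i+1)) (i+1) n x = (\<Sum>t\<in>{..d}. x n ^ t * g t i)"
  proof -
    fix i assume i: "i < n"
    have "(\<Sum>t\<in>{..d}. x n ^ t * g t i) = (\<Sum>t<d. x n ^ t * g t i) + x n ^ d * g d i"
      by (simp add: lessThan_Suc_atMost[symmetric])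
    also have "(\<Sum>t<d. x n ^ t * g t i) = (\<Sum>t<d. x n ^ t * hcomp (c0 + int (i+1) - int t) (i+1) m x)"
      by (rule sum.cong) (auto simp: g_def)
    finally show "hcomp (c0 + int (i+1)) (i+1) n x = (\<Sum>t\<in>{..d}. x n ^ t * g t i)"
      using hcomp_expand[of "i+1" m "c0 + int (i+1)" x d] i n by (simp add: g_def)
  qed
  have "det (mat n n (\<lambda>(i,j). if j = p then hcomp (c0 + int (i+1)) (i+1) n x else F i j))
      = det (mat n n (\<lambda>(i,j). if j = p then (\<Sum>t\<in>{..d}. x n ^ t * g t i) else F i j))"
    using col by (intro arg_cong[where f=det] eq_matI) auto
  also have "\<dots> = (\<Sum>t\<in>{..d}. x n ^ t * det (mat n n (\<lambda>(i,j). if j = p then g t i else F i j)))"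
    by (rule det_col_lin) (use pn in auto)
  also have "\<dots> = (\<Sum>t<d. x n ^ t * det (mat n n (\<lambda>(i,j). if j = p then g t i else F i j)))
        + x n ^ d * det (mat n n (\<lambda>(i,j). if j = p then g d i else F i j))"
    by (simp add: lessThan_Suc_atMost[symmetric])
  also have "det (mat n n (\<lambda>(i,j). if j = p then g d i else F i j)) = 0"
  proof -
    have "mat n n (\<lambda>(i,j). if j = p then g d i else F i j)
        = mat n n (\<lambda>(i,j). if j = p then hcomp (c0 - int d + int (i+1)) (i+1) n x else F i j)"
      by (intro eq_matI) (auto simp: g_def algebra_simps)
    thus ?thesis using Z by simp
  qed
  also have "(\<Sum>t<d. x n ^ t * det (mat n n (\<lambda>(i,j). if j = p then g t i else F i j)))
      = (\<Sum>t<d. x n ^ t * det (mat n n (\<lambda>(i,j). if j = p then hcomp (c0 - int t + int (i+1)) (i+1) m x else F i j)))"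
  proof (rule sum.cong[OF refl])
    fix t assume "t \<in> {..<d}"
    hence "mat n n (\<lambda>(i,j). if j = p then g t i else F i j)
        = mat n n (\<lambda>(i,j). if j = p then hcomp (c0 - int t + int (i+1)) (i+1) m x else F i j)"
      by (intro eq_matI) (auto simp: g_def algebra_simps)
    thus "x n ^ t * det (mat n n (\<lambda>(i,j). if j = p then g t i else F i j))
        = x n ^ t * det (mat n n (\<lambda>(i,j). if j = p then hcomp (c0 - int t + int (i+1)) (i+1) m x else F i j))"
      by simp
  qed
  finally show ?thesis by simp
qed

definition nx :: "nat \<Rightarrow> (nat \<Rightarrow> nat) \<Rightarrow> nat \<Rightarrow> nat" where
  "nx n \<nu> j = (if j < n then \<nu> (Suc j) else 0)"

definition Qs :: "nat \<Rightarrow> (nat \<Rightarrow> nat) \<Rightarrow> (nat \<Rightarrow> nat) \<Rightarrow> nat \<Rightarrow> (nat \<Rightarrow> nat) set" where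
  "Qs n \<nu> b p = {\<mu>. (\<forall>j. (1 \<le> j \<and> j \<le> p \<and> b j = n) \<longrightarrow> nx n \<nu> j \<le> \<mu> j \<and> \<mu> j \<le> \<nu> j)
                   \<and> (\<forall>j. \<not>(1 \<le> j \<and> j \<le> p \<and> b j = n) \<longrightarrow> \<mu> j = \<nu> j)}"

definition wt :: "nat \<Rightarrow> (nat \<Rightarrow> nat) \<Rightarrow> (nat \<Rightarrow> nat) \<Rightarrow> nat" where
  "wt n \<nu> \<mu> = (\<Sum>j=1..n. \<nu> j - \<mu> j)"

lemma wt_upd:
  assumes "1 \<le> q" "q \<le> n" "\<mu> q = \<nu> q" "t \<le> \<nu> q"
  shows "wt n \<nu> (\<mu>(q := \<nu> q - t)) = wt n \<nu> \<mu> + t"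
proof -
  have q: "q \<in> {1..n}" using assms by auto
  let ?R = "(\<Sum>j\<in>{1..n}-{q}. \<nu> j - \<mu> j)"
  have e1: "wt n \<nu> (\<mu>(q := \<nu> q - t)) = (\<nu> q - (\<nu> q - t)) + (\<Sum>j\<in>{1..n}-{q}. \<nu> j - (\<mu>(q := \<nu> q - t)) j)"
    unfolding wt_def by (subst sum.remove[OF _ q]) auto
  have e2: "(\<Sum>j\<in>{1..n}-{q}. \<nu> j - (\<mu>(q := \<nu> q - t)) j) = ?R"
    by (rule sum.cong) auto
  have e3: "wt n \<nu> \<mu> = (\<nu> q - \<mu> q) + ?R"
    unfolding wt_def by (subst sum.remove[OF _ q]) auto
  show ?thesis unfolding e1 e2 e3 using assms by simp
qed

lemma pieri:
  fixes x :: "nat \<Rightarrow> 'a::comm_ring_1"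
  assumes n: "n = Suc m" and part: "is_partition n \<nu>"
    and bb: "\<forall>j. 1 \<le> j \<and> j \<le> n \<longrightarrow> j \<le> b j \<and> b j \<le> n"
    and mono: "\<forall>j. 1 \<le> j \<and> j < n \<longrightarrow> b j \<le> b (j+1)"
  shows "p \<le> n \<Longrightarrow> hmat n (\<lambda>j. int (\<nu> j) - int j) b x
     = (\<Sum>\<mu>\<in>Qs n \<nu> b p. x n ^ wt n \<nu> \<mu> * hmat n (\<lambda>j. int (\<mu> j) - int j) (\<lambda>j. if j \<le> p then min (b j) m else b j) x)"
proof (induction p)
  case 0
  have Q: "Qs n \<nu> b 0 = {\<nu>}" unfolding Qs_def by auto
  show ?case unfolding Q wt_def by (simp, intro hmat_cong) auto
next
  case (Suc p)
  let ?q = "Suc p"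
  let ?Bp = "\<lambda>j. if j \<le> p then min (b j) m else b j"
  let ?Bq = "\<lambda>j. if j \<le> Suc p then min (b j) m else b j"
  have IH: "hmat n (\<lambda>j. int (\<nu> j) - int j) b x
     = (\<Sum>\<mu>\<in>Qs n \<nu> b p. x n ^ wt n \<nu> \<mu> * hmat n (\<lambda>j. int (\<mu> j) - int j) ?Bp x)"
    using Suc by simp
  show ?case
  proof (cases "b ?q = n")
    case False
    have bq: "b ?q \<le> m" using bb Suc.prems False n by force
    have Q: "Qs n \<nu> b (Suc p) = Qs n \<nu> b p"
      unfolding Qs_def using False by (auto simp: le_Suc_eq)
    show ?thesis unfolding IH Q
      by (rule sum.cong[OF refl], rule arg_cong[where f="\<lambda>z. _ * z"], rule hmat_cong)
         (use bq in \<open>auto simp: le_Suc_eq\<close>)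
  next
    case True
    define d where "d = \<nu> ?q - nx n \<nu> ?q + 1"
    have nxle: "nx n \<nu> ?q \<le> \<nu> ?q"
      using part Suc.prems unfolding nx_def is_partition_def by auto
    have step: "hmat n (\<lambda>j. int (\<mu> j) - int j) ?Bp x
        = (\<Sum>t<d. x n ^ t * hmat n (\<lambda>j. int ((\<mu>(?q := \<nu> ?q - t)) j) - int j) ?Bq x)"
      if mu: "\<mu> \<in> Qs n \<nu> b p" for \<mu>
    proof -
      have muq: "\<And>j. j > p \<Longrightarrow> \<mu> j = \<nu> j" using mu unfolding Qs_def by auto
      define F where "F i j = hcomp (int (\<mu> (j+1)) - int (j+1) + int (i+1)) (i+1) (?Bp (j+1)) x" for i j
      define c0 where "c0 = int (\<nu> ?q) - int ?q"
      have pn: "p < n" using Suc.prems by simp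
      have L: "hmat n (\<lambda>j. int (\<mu> j) - int j) ?Bp x
          = det (mat n n (\<lambda>(i,j). if j = p then hcomp (c0 + int (i+1)) (i+1) n x else F i j))"
        unfolding hmat_def
        by (intro arg_cong[where f=det] eq_matI) (auto simp: F_def c0_def muq True)
      have Z: "det (mat n n (\<lambda>(i,j). if j = p then hcomp (c0 - int d + int (i+1)) (i+1) n x else F i j)) = 0"
      proof (cases "?q < n")
        case True
        have "b ?q \<le> b (?q+1)" using mono True by simp
        moreover have "b (?q+1) \<le> n" using bb True by simp
        ultimately have bq1: "b (Suc (Suc p)) = n" using \<open>b ?q = n\<close> by simp
        have cd: "c0 - int d = int (\<nu> (?q+1)) - int (?q+1)"
          using True nxle unfolding c0_def d_def nx_def by auto
        show ?thesis
          by (rule det_ident_cols[of p n "Suc p"]) (use True in \<open>auto simp: F_def cd muq bq1\<close>)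
      next
        case False
        hence qn: "?q = n" using Suc.prems by simp
        have cd: "c0 - int d = - int n - 1"
          using qn unfolding c0_def d_def nx_def by auto
        show ?thesis
          by (rule det_zero_col[of p n]) (use pn in \<open>auto simp: cd\<close>)
      qed
      have "hmat n (\<lambda>j. int (\<mu> j) - int j) ?Bp x
          = (\<Sum>t<d. x n ^ t * det (mat n n (\<lambda>(i,j). if j = p then hcomp (c0 - int t + int (i+1)) (i+1) m x else F i j)))"
        unfolding L by (rule expand_col[OF n pn Z])
      also have "\<dots> = (\<Sum>t<d. x n ^ t * hmat n (\<lambda>j. int ((\<mu>(?q := \<nu> ?q - t)) j) - int j) ?Bq x)"
      proof (rule sum.cong[OF refl])
        fix t assume "t \<in> {..<d}"
        hence tle: "t \<le> \<nu> ?q" unfolding d_def using nxle by auto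
        have "mat n n (\<lambda>(i,j). if j = p then hcomp (c0 - int t + int (i+1)) (i+1) m x else F i j)
           = mat n n (\<lambda>(i,j). hcomp (int ((\<mu>(?q := \<nu> ?q - t)) (j+1)) - int (j+1) + int (i+1)) (i+1) (?Bq (j+1)) x)"
          by (intro eq_matI) (auto simp: F_def c0_def tle True n of_nat_diff algebra_simps)
        thus "x n ^ t * det (mat n n (\<lambda>(i,j). if j = p then hcomp (c0 - int t + int (i+1)) (i+1) m x else F i j))
            = x n ^ t * hmat n (\<lambda>j. int ((\<mu>(?q := \<nu> ?q - t)) j) - int j) ?Bq x"
          unfolding hmat_def by simp
      qed
      finally show ?thesis .
    qed
    let ?G = "\<lambda>\<mu>. x n ^ wt n \<nu> \<mu> * hmat n (\<lambda>j. int (\<mu> j) - int j) ?Bq x"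
    have "hmat n (\<lambda>j. int (\<nu> j) - int j) b x
        = (\<Sum>\<mu>\<in>Qs n \<nu> b p. \<Sum>t<d. ?G (\<mu>(?q := \<nu> ?q - t)))"
    proof -
      have "\<And>\<mu>. \<mu> \<in> Qs n \<nu> b p \<Longrightarrow> x n ^ wt n \<nu> \<mu> * hmat n (\<lambda>j. int (\<mu> j) - int j) ?Bp x
           = (\<Sum>t<d. ?G (\<mu>(?q := \<nu> ?q - t)))"
      proof -
        fix \<mu> assume mu: "\<mu> \<in> Qs n \<nu> b p"
        have muq: "\<mu> ?q = \<nu> ?q" using mu unfolding Qs_def by auto
        have "x n ^ wt n \<nu> \<mu> * hmat n (\<lambda>j. int (\<mu> j) - int j) ?Bp x
           = (\<Sum>t<d. x n ^ wt n \<nu> \<mu> * (x n ^ t * hmat n (\<lambda>j. int ((\<mu>(?q := \<nu> ?q - t)) j) - int j) ?Bq x))"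
          unfolding step[OF mu] by (simp add: sum_distrib_left)
        also have "\<dots> = (\<Sum>t<d. ?G (\<mu>(?q := \<nu> ?q - t)))"
        proof (rule sum.cong[OF refl])
          fix t assume "t \<in> {..<d}"
          hence tle: "t \<le> \<nu> ?q" unfolding d_def using nxle by auto
          have w: "wt n \<nu> (\<mu>(?q := \<nu> ?q - t)) = wt n \<nu> \<mu> + t"
            by (rule wt_upd) (use Suc.prems muq tle in auto)
          show "x n ^ wt n \<nu> \<mu> * (x n ^ t * hmat n (\<lambda>j. int ((\<mu>(?q := \<nu> ?q - t)) j) - int j) ?Bq x)
              = ?G (\<mu>(?q := \<nu> ?q - t))"
            unfolding w by (simp add: power_add)
        qed
        finally show "x n ^ wt n \<nu> \<mu> * hmat n (\<lambda>j. int (\<mu> j) - int j) ?Bp x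
           = (\<Sum>t<d. ?G (\<mu>(?q := \<nu> ?q - t)))" .
      qed
      thus ?thesis unfolding IH by (rule sum.cong[OF refl])
    qed
    also have "\<dots> = (\<Sum>(\<mu>,t)\<in>Qs n \<nu> b p \<times> {..<d}. ?G (\<mu>(?q := \<nu> ?q - t)))"
      by (rule sum.cartesian_product)
    also have "\<dots> = (\<Sum>\<mu>\<in>Qs n \<nu> b (Suc p). ?G \<mu>)"
    proof (rule sum.reindex_bij_witness[where i="\<lambda>\<mu>. (\<mu>(?q := \<nu> ?q), \<nu> ?q - \<mu> ?q)" and j="\<lambda>(\<mu>,t). \<mu>(?q := \<nu> ?q - t)"])
      fix a assume a: "a \<in> Qs n \<nu> b p \<times> {..<d}"
      obtain \<mu> t where at: "a = (\<mu>, t)" by (cases a)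
      have mu: "\<mu> \<in> Qs n \<nu> b p" and td: "t < d" using a at by auto
      have muq: "\<mu> ?q = \<nu> ?q" using mu unfolding Qs_def by auto
      have tle: "t \<le> \<nu> ?q - nx n \<nu> ?q" using td unfolding d_def by simp
      show "(\<lambda>\<mu>. (\<mu>(?q := \<nu> ?q), \<nu> ?q - \<mu> ?q)) (case a of (\<mu>, t) \<Rightarrow> \<mu>(?q := \<nu> ?q - t)) = a"
        using at muq tle nxle by (auto simp: fun_eq_iff)
      show "(case a of (\<mu>, t) \<Rightarrow> \<mu>(?q := \<nu> ?q - t)) \<in> Qs n \<nu> b (Suc p)"
        using at mu tle nxle True unfolding Qs_def by (auto simp: le_Suc_eq)
      show "?G (case a of (\<mu>, t) \<Rightarrow> \<mu>(?q := \<nu> ?q - t)) = (case a of (\<mu>, t) \<Rightarrow> ?G (\<mu>(?q := \<nu> ?q - t)))"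
        using at by simp
    next
      fix \<mu> assume mu: "\<mu> \<in> Qs n \<nu> b (Suc p)"
      have r1: "nx n \<nu> ?q \<le> \<mu> ?q \<and> \<mu> ?q \<le> \<nu> ?q" using mu True Suc.prems unfolding Qs_def by auto
      show "(case (\<mu>(?q := \<nu> ?q), \<nu> ?q - \<mu> ?q) of (\<mu>, t) \<Rightarrow> \<mu>(?q := \<nu> ?q - t)) = \<mu>"
        using r1 by (auto simp: fun_eq_iff)
      show "(\<mu>(?q := \<nu> ?q), \<nu> ?q - \<mu> ?q) \<in> Qs n \<nu> b p \<times> {..<d}"
        using mu r1 unfolding Qs_def d_def by (auto simp: le_Suc_eq)
    qed
    finally show ?thesis .
  qed
qed




lemma downclosed_card:
  assumes fin: "finite S" and pos: "\<forall>j\<in>S. 1 \<le> j"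
    and dc: "\<forall>j\<in>S. \<forall>j'. 1 \<le> j' \<and> j' \<le> j \<longrightarrow> j' \<in> S"
  shows "S = {1..card S}"
proof (cases "S = {}")
  case True thus ?thesis by simp
next
  case False
  let ?M = "Max S"
  have MS: "?M \<in> S" using fin False by simp
  have e: "S = {1..?M}"
  proof
    show "S \<subseteq> {1..?M}" using fin pos by auto
    show "{1..?M} \<subseteq> S" using dc MS by auto
  qed
  have c: "card S = ?M" by (subst e) simp
  show ?thesis unfolding c by (rule e)
qed

lemma SSYT_row_mono:
  assumes T: "T \<in> SSYT n \<nu>" and i: "1 \<le> i" "i \<le> n" and j: "1 \<le> j" "j \<le> j'" "j' \<le> \<nu> i"
  shows "T i j \<le> T i j'"
  using j(2,3)
proof (induction j')
  case 0 thus ?case using j(1) by simp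
next
  case (Suc j')
  show ?case
  proof (cases "j = Suc j'")
    case False
    hence "T i j \<le> T i j'" using Suc by simp
    also have "T i j' \<le> T i (Suc j')"
    proof -
      have "in_shape n \<nu> i j' \<and> in_shape n \<nu> i (j'+1)"
        using i j(1) Suc.prems False unfolding in_shape_def by auto
      thus ?thesis using T unfolding SSYT_def by auto
    qed
    finally show ?thesis .
  qed simp
qed

lemma in_shape_up:
  assumes "is_partition n \<nu>" "in_shape n \<nu> (Suc i) j" "1 \<le> i"
  shows "in_shape n \<nu> i j"
  using assms unfolding in_shape_def is_partition_def by (auto intro: le_trans)

lemma SSYT_ge_row:
  assumes T: "T \<in> SSYT n \<nu>" and part: "is_partition n \<nu>"
  shows "in_shape n \<nu> i j \<Longrightarrow> i \<le> T i j"
proof (induction i)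
  case 0 thus ?case by simp
next
  case (Suc i)
  show ?case
  proof (cases "i = 0")
    case True thus ?thesis using T Suc.prems unfolding SSYT_def by auto
  next
    case False
    have up: "in_shape n \<nu> i j" using in_shape_up[OF part Suc.prems] False by simp
    hence "i \<le> T i j" by (rule Suc.IH)
    also have "T i j < T (Suc i) j" using T up Suc.prems unfolding SSYT_def by auto
    finally show ?thesis by simp
  qed
qed

lemma SSYT_le: "T \<in> SSYT n \<nu> \<Longrightarrow> T i j \<le> n"
  unfolding SSYT_def by (cases "in_shape n \<nu> i j") auto

lemma SSYT_finite: "finite (SSYT n \<nu>)"
proof -
  let ?K = "\<Sum>i=1..n. \<nu> i"
  have "SSYT n \<nu> \<subseteq> {T :: nat \<Rightarrow> nat \<Rightarrow> nat. (\<forall>i j. (i \<notin> {1..n} \<or> j \<notin> {1..?K}) \<longrightarrow> T i j = 0) \<and> (\<forall>i j. T i j \<le> n)}"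
  proof
    fix T assume T: "T \<in> SSYT n \<nu>"
    have "\<forall>i j. (i \<notin> {1..n} \<or> j \<notin> {1..?K}) \<longrightarrow> T i j = 0"
    proof (intro allI impI)
      fix i j assume ij: "i \<notin> {1..n} \<or> j \<notin> {1..?K}"
      have "\<not> in_shape n \<nu> i j"
      proof
        assume s: "in_shape n \<nu> i j"
        hence "i \<in> {1..n}" unfolding in_shape_def by auto
        hence "\<nu> i \<le> ?K" by (intro member_le_sum) auto
        thus False using s ij unfolding in_shape_def by auto
      qed
      thus "T i j = 0" using T unfolding SSYT_def by auto
    qed
    thus "T \<in> {T :: nat \<Rightarrow> nat \<Rightarrow> nat. (\<forall>i j. (i \<notin> {1..n} \<or> j \<notin> {1..?K}) \<longrightarrow> T i j = 0) \<and> (\<forall>i j. T i j \<le> n)}"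
      using SSYT_le[OF T] by auto
  qed
  thus ?thesis using fin_funs2[of "{1..n}" "{1..?K}" n] finite_subset by auto
qed

definition rowS :: "nat \<Rightarrow> (nat \<Rightarrow> nat) \<Rightarrow> (nat \<Rightarrow> nat \<Rightarrow> nat) \<Rightarrow> nat \<Rightarrow> nat set" where
  "rowS n \<nu> T i = {j \<in> {1..\<nu> i}. T i j < n}"

definition muT :: "nat \<Rightarrow> (nat \<Rightarrow> nat) \<Rightarrow> (nat \<Rightarrow> nat \<Rightarrow> nat) \<Rightarrow> nat \<Rightarrow> nat" where
  "muT n \<nu> T i = (if 1 \<le> i \<and> i \<le> n then card (rowS n \<nu> T i) else \<nu> i)"

definition resT :: "nat \<Rightarrow> (nat \<Rightarrow> nat) \<Rightarrow> (nat \<Rightarrow> nat \<Rightarrow> nat) \<Rightarrow> nat \<Rightarrow> nat \<Rightarrow> nat" where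
  "resT m \<mu> T = (\<lambda>i j. if in_shape m \<mu> i j then T i j else 0)"

definition extT :: "nat \<Rightarrow> nat \<Rightarrow> (nat \<Rightarrow> nat) \<Rightarrow> (nat \<Rightarrow> nat) \<Rightarrow> (nat \<Rightarrow> nat \<Rightarrow> nat) \<Rightarrow> nat \<Rightarrow> nat \<Rightarrow> nat" where
  "extT n m \<nu> \<mu> T' = (\<lambda>i j. if in_shape m \<mu> i j then T' i j else if in_shape n \<nu> i j then n else 0)"

definition Sb :: "nat \<Rightarrow> (nat \<Rightarrow> nat) \<Rightarrow> (nat \<Rightarrow> nat) \<Rightarrow> (nat \<Rightarrow> nat \<Rightarrow> nat) set" where
  "Sb n \<nu> b = {T \<in> SSYT n \<nu>. \<forall>i j. in_shape n \<nu> i j \<longrightarrow> T i j \<le> b i}"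

lemma rbs_Sb: "row_bound_sum n \<nu> b x = (\<Sum>T\<in>Sb n \<nu> b. \<Prod>k = 1..n. x k ^ theta n \<nu> T k)"
  unfolding row_bound_sum_def Sb_def by simp

lemma rowS_char:
  assumes T: "T \<in> SSYT n \<nu>" and i: "1 \<le> i" "i \<le> n"
  shows "rowS n \<nu> T i = {1..card (rowS n \<nu> T i)}"
proof (rule downclosed_card)
  show "finite (rowS n \<nu> T i)" unfolding rowS_def by simp
  show "\<forall>j\<in>rowS n \<nu> T i. 1 \<le> j" unfolding rowS_def by simp
  show "\<forall>j\<in>rowS n \<nu> T i. \<forall>j'. 1 \<le> j' \<and> j' \<le> j \<longrightarrow> j' \<in> rowS n \<nu> T i"
  proof (intro ballI allI impI)
    fix j j' assume j: "j \<in> rowS n \<nu> T i" and j': "1 \<le> j' \<and> j' \<le> j"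
    have "T i j' \<le> T i j" by (rule SSYT_row_mono[OF T i]) (use j j' in \<open>auto simp: rowS_def\<close>)
    thus "j' \<in> rowS n \<nu> T i" using j j' unfolding rowS_def by auto
  qed
qed

lemma SSYT_out: "T \<in> SSYT n \<nu> \<Longrightarrow> \<not> in_shape n \<nu> i j \<Longrightarrow> T i j = 0"
  unfolding SSYT_def by blast
lemma SSYT_in: "T \<in> SSYT n \<nu> \<Longrightarrow> in_shape n \<nu> i j \<Longrightarrow> 1 \<le> T i j \<and> T i j \<le> n"
  unfolding SSYT_def by blast
lemma SSYT_row: "T \<in> SSYT n \<nu> \<Longrightarrow> in_shape n \<nu> i j \<Longrightarrow> in_shape n \<nu> i (j+1) \<Longrightarrow> T i j \<le> T i (j+1)"
  unfolding SSYT_def by blast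
lemma SSYT_col: "T \<in> SSYT n \<nu> \<Longrightarrow> in_shape n \<nu> i j \<Longrightarrow> in_shape n \<nu> (i+1) j \<Longrightarrow> T i j < T (i+1) j"
  unfolding SSYT_def by blast
lemma SSYT_I:
  assumes "\<And>i j. \<not> in_shape n \<nu> i j \<Longrightarrow> T i j = 0"
    "\<And>i j. in_shape n \<nu> i j \<Longrightarrow> 1 \<le> T i j \<and> T i j \<le> n"
    "\<And>i j. in_shape n \<nu> i j \<Longrightarrow> in_shape n \<nu> i (j+1) \<Longrightarrow> T i j \<le> T i (j+1)"
    "\<And>i j. in_shape n \<nu> i j \<Longrightarrow> in_shape n \<nu> (i+1) j \<Longrightarrow> T i j < T (i+1) j"
  shows "T \<in> SSYT n \<nu>"
  unfolding SSYT_def using assms by blast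

context
  fixes n m :: nat and \<nu> b :: "nat \<Rightarrow> nat"
  assumes n: "n = Suc m" and part: "is_partition n \<nu>"
    and bb: "\<forall>j. 1 \<le> j \<and> j \<le> n \<longrightarrow> j \<le> b j \<and> b j \<le> n"
begin

lemma muT_char:
  assumes T: "T \<in> SSYT n \<nu>" and i: "1 \<le> i" "i \<le> n" and j: "1 \<le> j" "j \<le> \<nu> i"
  shows "T i j < n \<longleftrightarrow> j \<le> muT n \<nu> T i"
proof -
  have "muT n \<nu> T i = card (rowS n \<nu> T i)" using i unfolding muT_def by simp
  moreover have "j \<in> rowS n \<nu> T i \<longleftrightarrow> T i j < n" using j unfolding rowS_def by auto
  moreover have "j \<in> rowS n \<nu> T i \<longleftrightarrow> j \<le> card (rowS n \<nu> T i)"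
    using rowS_char[OF T i] j by (metis atLeastAtMost_iff)
  ultimately show ?thesis by simp
qed

lemma muT_le: "T \<in> SSYT n \<nu> \<Longrightarrow> muT n \<nu> T i \<le> \<nu> i"
proof -
  assume T: "T \<in> SSYT n \<nu>"
  show ?thesis
  proof (cases "1 \<le> i \<and> i \<le> n")
    case True
    have "card (rowS n \<nu> T i) \<le> card {1..\<nu> i}" unfolding rowS_def by (intro card_mono) auto
    thus ?thesis using True unfolding muT_def by simp
  qed (auto simp: muT_def)
qed

lemma muT_n: "T \<in> SSYT n \<nu> \<Longrightarrow> muT n \<nu> T n = 0"
proof -
  assume T: "T \<in> SSYT n \<nu>"
  have "rowS n \<nu> T n = {}"
  proof -
    have "\<forall>j \<in> {1..\<nu> n}. n \<le> T n j"
    proof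
      fix j assume "j \<in> {1..\<nu> n}"
      hence "in_shape n \<nu> n j" using n unfolding in_shape_def by auto
      thus "n \<le> T n j" using SSYT_ge_row[OF T part] by blast
    qed
    thus ?thesis unfolding rowS_def by fastforce
  qed
  thus ?thesis unfolding muT_def using n by simp
qed

lemma muT_Q:
  assumes T: "T \<in> Sb n \<nu> b"
  shows "muT n \<nu> T \<in> Qs n \<nu> b n"
proof -
  have TS: "T \<in> SSYT n \<nu>" using T unfolding Sb_def by simp
  let ?\<mu> = "muT n \<nu> T"
  have A: "\<forall>j. (1 \<le> j \<and> j \<le> n \<and> b j = n) \<longrightarrow> nx n \<nu> j \<le> ?\<mu> j \<and> ?\<mu> j \<le> \<nu> j"
  proof (intro allI impI)
    fix j assume j: "1 \<le> j \<and> j \<le> n \<and> b j = n"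
    have "nx n \<nu> j \<le> ?\<mu> j"
    proof (cases "j < n")
      case True
      have "\<nu> (Suc j) \<le> ?\<mu> j"
      proof (cases "\<nu> (Suc j) = 0")
        case False
        let ?c = "\<nu> (Suc j)"
        have sh: "in_shape n \<nu> (Suc j) ?c" using True False unfolding in_shape_def by auto
        have sh2: "in_shape n \<nu> j ?c" using in_shape_up[OF part sh] j by simp
        have "T j ?c < T (Suc j) ?c" using TS sh sh2 unfolding SSYT_def by auto
        also have "T (Suc j) ?c \<le> n" by (rule SSYT_le[OF TS])
        finally have "T j ?c < n" .
        thus ?thesis using muT_char[OF TS, of j ?c] j sh2 unfolding in_shape_def by auto
      qed simp
      thus ?thesis using True unfolding nx_def by simp
    qed (simp add: nx_def)
    thus "nx n \<nu> j \<le> ?\<mu> j \<and> ?\<mu> j \<le> \<nu> j" using muT_le[OF TS] by simp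
  qed
  have B: "\<forall>j. \<not>(1 \<le> j \<and> j \<le> n \<and> b j = n) \<longrightarrow> ?\<mu> j = \<nu> j"
  proof (intro allI impI)
    fix j assume j: "\<not>(1 \<le> j \<and> j \<le> n \<and> b j = n)"
    show "?\<mu> j = \<nu> j"
    proof (cases "1 \<le> j \<and> j \<le> n")
      case True
      hence bj: "b j < n" using j bb by force
      have "\<nu> j \<le> ?\<mu> j"
      proof (cases "\<nu> j = 0")
        case False
        have sh: "in_shape n \<nu> j (\<nu> j)" using True False unfolding in_shape_def by auto
        have "T j (\<nu> j) \<le> b j" using T sh unfolding Sb_def by auto
        hence "T j (\<nu> j) < n" using bj by simp
        thus ?thesis using muT_char[OF TS, of j "\<nu> j"] True False by auto
      qed simp
      thus ?thesis using muT_le[OF TS, of j] by simp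
    qed (auto simp: muT_def)
  qed
  show ?thesis unfolding Qs_def using A B by blast
qed


lemma Q_le: "\<mu> \<in> Qs n \<nu> b p \<Longrightarrow> \<mu> i \<le> \<nu> i"
  unfolding Qs_def by (cases "1 \<le> i \<and> i \<le> p \<and> b i = n") auto

lemma Q_ge_next: "\<mu> \<in> Qs n \<nu> b n \<Longrightarrow> 1 \<le> i \<Longrightarrow> i < n \<Longrightarrow> \<nu> (Suc i) \<le> \<mu> i"
proof -
  assume mu: "\<mu> \<in> Qs n \<nu> b n" and i: "1 \<le> i" "i < n"
  show ?thesis
  proof (cases "b i = n")
    case True
    thus ?thesis using mu i unfolding Qs_def nx_def by auto
  next
    case False
    hence "\<mu> i = \<nu> i" using mu i unfolding Qs_def by auto
    thus ?thesis using part i unfolding is_partition_def by auto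
  qed
qed

lemma Q_out: "\<mu> \<in> Qs n \<nu> b n \<Longrightarrow> \<not> (1 \<le> i \<and> i \<le> n) \<Longrightarrow> \<mu> i = \<nu> i"
  unfolding Qs_def by auto

lemma Q_small: "\<mu> \<in> Qs n \<nu> b n \<Longrightarrow> 1 \<le> i \<Longrightarrow> i \<le> n \<Longrightarrow> b i < n \<Longrightarrow> \<mu> i = \<nu> i"
  unfolding Qs_def by auto

lemma shape_mn: "(\<And>i. \<mu> i \<le> \<nu> i) \<Longrightarrow> in_shape m \<mu> i j \<Longrightarrow> in_shape n \<nu> i j"
  unfolding in_shape_def using n by (auto intro: le_trans)

lemma Phi_in:
  assumes T: "T \<in> Sb n \<nu> b"
  shows "resT m (muT n \<nu> T) T \<in> Sb m (muT n \<nu> T) (\<lambda>j. min (b j) m)"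
proof -
  let ?\<mu> = "muT n \<nu> T"
  have TS: "T \<in> SSYT n \<nu>" using T unfolding Sb_def by simp
  have le: "\<And>i. ?\<mu> i \<le> \<nu> i" using muT_le[OF TS] .
  have lt: "in_shape m ?\<mu> i j \<Longrightarrow> T i j < n" for i j
  proof -
    assume s: "in_shape m ?\<mu> i j"
    hence "1 \<le> i" "i \<le> n" "1 \<le> j" "j \<le> \<nu> i" "j \<le> ?\<mu> i" using le[of i] n unfolding in_shape_def by auto
    thus ?thesis using muT_char[OF TS] by blast
  qed
  have S: "resT m ?\<mu> T \<in> SSYT m ?\<mu>"
  proof (rule SSYT_I)
    fix i j
    show "\<not> in_shape m ?\<mu> i j \<Longrightarrow> resT m ?\<mu> T i j = 0" unfolding resT_def by simp
    show "in_shape m ?\<mu> i j \<Longrightarrow> 1 \<le> resT m ?\<mu> T i j \<and> resT m ?\<mu> T i j \<le> m"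
      using SSYT_in[OF TS shape_mn[OF le]] lt n unfolding resT_def by force
    show "in_shape m ?\<mu> i j \<Longrightarrow> in_shape m ?\<mu> i (j+1) \<Longrightarrow> resT m ?\<mu> T i j \<le> resT m ?\<mu> T i (j+1)"
      using SSYT_row[OF TS shape_mn[OF le] shape_mn[OF le]] unfolding resT_def by simp
    show "in_shape m ?\<mu> i j \<Longrightarrow> in_shape m ?\<mu> (i+1) j \<Longrightarrow> resT m ?\<mu> T i j < resT m ?\<mu> T (i+1) j"
      using SSYT_col[OF TS shape_mn[OF le] shape_mn[OF le]] unfolding resT_def by simp
  qed
  have B: "\<forall>i j. in_shape m ?\<mu> i j \<longrightarrow> resT m ?\<mu> T i j \<le> min (b i) m"
  proof (intro allI impI)
    fix i j assume s: "in_shape m ?\<mu> i j"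
    have "T i j \<le> b i" using T shape_mn[OF le s] unfolding Sb_def by blast
    thus "resT m ?\<mu> T i j \<le> min (b i) m" using lt[OF s] s n unfolding resT_def by simp
  qed
  show ?thesis using S B unfolding Sb_def by blast
qed

lemma Psi_Phi:
  assumes T: "T \<in> Sb n \<nu> b"
  shows "extT n m \<nu> (muT n \<nu> T) (resT m (muT n \<nu> T) T) = T"
proof (intro ext)
  fix i j
  let ?\<mu> = "muT n \<nu> T"
  have TS: "T \<in> SSYT n \<nu>" using T unfolding Sb_def by simp
  show "extT n m \<nu> ?\<mu> (resT m ?\<mu> T) i j = T i j"
  proof (cases "in_shape m ?\<mu> i j")
    case True thus ?thesis unfolding extT_def resT_def by simp
  next
    case False
    show ?thesis
    proof (cases "in_shape n \<nu> i j")
      case True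
      have "n \<le> T i j"
      proof (cases "i = n")
        case True
        thus ?thesis using SSYT_ge_row[OF TS part] \<open>in_shape n \<nu> i j\<close> by blast
      next
        case ne: False
        hence "i \<le> m" "1 \<le> i" "i \<le> n" "1 \<le> j" "j \<le> \<nu> i" using True n unfolding in_shape_def by auto
        moreover have "\<not> j \<le> ?\<mu> i" using False calculation unfolding in_shape_def by auto
        ultimately show ?thesis using muT_char[OF TS] by (meson not_less)
      qed
      hence "T i j = n" using SSYT_le[OF TS, of i j] by simp
      thus ?thesis using False True unfolding extT_def by simp
    next
      case nsh: False
      thus ?thesis using False SSYT_out[OF TS nsh] unfolding extT_def by simp
    qed
  qed
qed

definition P0 :: "(nat \<Rightarrow> nat) set" where "P0 = {\<mu> \<in> Qs n \<nu> b n. \<mu> n = 0}"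

lemma Phi_P0: "T \<in> Sb n \<nu> b \<Longrightarrow> muT n \<nu> T \<in> P0"
  using muT_Q muT_n unfolding P0_def Sb_def by blast

lemma Phi_Psi:
  assumes mu: "\<mu> \<in> P0" and T': "T' \<in> Sb m \<mu> (\<lambda>j. min (b j) m)"
  shows "muT n \<nu> (extT n m \<nu> \<mu> T') = \<mu>" "resT m \<mu> (extT n m \<nu> \<mu> T') = T'"
proof -
  have muQ: "\<mu> \<in> Qs n \<nu> b n" and mun: "\<mu> n = 0" using mu unfolding P0_def by auto
  have le: "\<And>i. \<mu> i \<le> \<nu> i" using Q_le[OF muQ] .
  have TS: "T' \<in> SSYT m \<mu>" using T' unfolding Sb_def by simp
  let ?E = "extT n m \<nu> \<mu> T'"
  show "muT n \<nu> ?E = \<mu>"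
  proof (intro ext)
    fix i
    show "muT n \<nu> ?E i = \<mu> i"
    proof (cases "1 \<le> i \<and> i \<le> n")
      case True
      have "rowS n \<nu> ?E i = {1..\<mu> i}"
      proof (cases "i = n")
        case True
        have "\<And>j. \<not> in_shape m \<mu> n j" unfolding in_shape_def using n by auto
        hence "rowS n \<nu> ?E i = {}" unfolding rowS_def extT_def in_shape_def using True by auto
        thus ?thesis using True mun by simp
      next
        case False
        hence im: "i \<le> m" using True n by simp
        show ?thesis
        proof (rule Set.set_eqI)
          fix j
          show "j \<in> rowS n \<nu> ?E i \<longleftrightarrow> j \<in> {1..\<mu> i}"
          proof
            assume j: "j \<in> rowS n \<nu> ?E i"
            hence j1: "1 \<le> j" "j \<le> \<nu> i" and lt: "?E i j < n" unfolding rowS_def by auto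
            have "in_shape m \<mu> i j"
            proof (rule ccontr)
              assume "\<not> in_shape m \<mu> i j"
              moreover have "in_shape n \<nu> i j" using True j1 unfolding in_shape_def by auto
              ultimately have "?E i j = n" unfolding extT_def by simp
              thus False using lt by simp
            qed
            thus "j \<in> {1..\<mu> i}" unfolding in_shape_def by auto
          next
            assume j: "j \<in> {1..\<mu> i}"
            hence s: "in_shape m \<mu> i j" using True im unfolding in_shape_def by auto
            hence "?E i j \<le> m" using SSYT_in[OF TS s] unfolding extT_def by simp
            thus "j \<in> rowS n \<nu> ?E i" using j le[of i] n unfolding rowS_def by auto
          qed
        qed
      qed
      thus ?thesis using True unfolding muT_def by simp
    next
      case False
      thus ?thesis using Q_out[OF muQ False] unfolding muT_def by auto
    qed
  qed
  show "resT m \<mu> ?E = T'"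
  proof (intro ext)
    fix i j
    show "resT m \<mu> ?E i j = T' i j"
      using SSYT_out[OF TS] unfolding resT_def extT_def by (cases "in_shape m \<mu> i j") auto
  qed
qed

lemma Psi_in:
  assumes mu: "\<mu> \<in> P0" and T': "T' \<in> Sb m \<mu> (\<lambda>j. min (b j) m)"
  shows "extT n m \<nu> \<mu> T' \<in> Sb n \<nu> b"
proof -
  have muQ: "\<mu> \<in> Qs n \<nu> b n" and mun: "\<mu> n = 0" using mu unfolding P0_def by auto
  have le: "\<And>i. \<mu> i \<le> \<nu> i" using Q_le[OF muQ] .
  have TS: "T' \<in> SSYT m \<mu>" using T' unfolding Sb_def by simp
  let ?E = "extT n m \<nu> \<mu> T'"
  have sub: "\<And>i j. in_shape m \<mu> i j \<Longrightarrow> in_shape n \<nu> i j" using shape_mn[OF le] .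
  have Tm: "\<And>i j. in_shape m \<mu> i j \<Longrightarrow> 1 \<le> T' i j \<and> T' i j \<le> m" using SSYT_in[OF TS] .
  have S: "?E \<in> SSYT n \<nu>"
  proof (rule SSYT_I)
    fix i j
    show "\<not> in_shape n \<nu> i j \<Longrightarrow> ?E i j = 0" using sub unfolding extT_def by auto
    show "in_shape n \<nu> i j \<Longrightarrow> 1 \<le> ?E i j \<and> ?E i j \<le> n" using Tm n unfolding extT_def by force
    show "in_shape n \<nu> i j \<Longrightarrow> in_shape n \<nu> i (j+1) \<Longrightarrow> ?E i j \<le> ?E i (j+1)"
    proof -
      assume s1: "in_shape n \<nu> i j" and s2: "in_shape n \<nu> i (j+1)"
      show "?E i j \<le> ?E i (j+1)"
      proof (cases "in_shape m \<mu> i (j+1)")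
        case True
        hence "in_shape m \<mu> i j" using s1 unfolding in_shape_def by auto
        thus ?thesis using True SSYT_row[OF TS] unfolding extT_def by simp
      next
        case False
        thus ?thesis using s2 Tm n unfolding extT_def by force
      qed
    qed
    show "in_shape n \<nu> i j \<Longrightarrow> in_shape n \<nu> (i+1) j \<Longrightarrow> ?E i j < ?E (i+1) j"
    proof -
      assume s1: "in_shape n \<nu> i j" and s2: "in_shape n \<nu> (i+1) j"
      show "?E i j < ?E (i+1) j"
      proof (cases "in_shape m \<mu> i j")
        case True
        show ?thesis
        proof (cases "in_shape m \<mu> (i+1) j")
          case True2: True
          thus ?thesis using True SSYT_col[OF TS] unfolding extT_def by simp
        next
          case False
          thus ?thesis using True s2 Tm n unfolding extT_def by force
        qed
      next
        case False
        have i: "1 \<le> i" "i < n" using s1 s2 unfolding in_shape_def by auto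
        hence "\<nu> (Suc i) \<le> \<mu> i" using Q_ge_next[OF muQ] by blast
        moreover have "j \<le> \<nu> (Suc i)" using s2 unfolding in_shape_def by auto
        ultimately have "in_shape m \<mu> i j" using s1 i n unfolding in_shape_def by auto
        thus ?thesis using False by simp
      qed
    qed
  qed
  have B: "\<forall>i j. in_shape n \<nu> i j \<longrightarrow> ?E i j \<le> b i"
  proof (intro allI impI)
    fix i j assume s: "in_shape n \<nu> i j"
    show "?E i j \<le> b i"
    proof (cases "in_shape m \<mu> i j")
      case True
      have "T' i j \<le> min (b i) m" using T' True unfolding Sb_def by blast
      thus ?thesis using True unfolding extT_def by simp
    next
      case False
      have i: "1 \<le> i" "i \<le> n" using s unfolding in_shape_def by auto
      have "b i = n"
      proof (rule ccontr)
        assume "b i \<noteq> n"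
        hence "b i < n" using bb i by force
        hence "\<mu> i = \<nu> i" using Q_small[OF muQ i] by simp
        moreover have "i \<noteq> n"
        proof
          assume "i = n"
          hence "n \<le> b n" using bb i by auto
          thus False using \<open>b i < n\<close> \<open>i = n\<close> by simp
        qed
        ultimately have "in_shape m \<mu> i j" using s i n unfolding in_shape_def by auto
        thus False using False by simp
      qed
      thus ?thesis using False s unfolding extT_def by simp
    qed
  qed
  show ?thesis using S B unfolding Sb_def by blast
qed


lemma weight:
  fixes x :: "nat \<Rightarrow> 'a::comm_ring_1"
  assumes T: "T \<in> Sb n \<nu> b"
  shows "(\<Prod>k = 1..n. x k ^ theta n \<nu> T k)
       = x n ^ wt n \<nu> (muT n \<nu> T) * (\<Prod>k = 1..m. x k ^ theta m (muT n \<nu> T) (resT m (muT n \<nu> T) T) k)"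
proof -
  let ?\<mu> = "muT n \<nu> T"
  let ?T' = "resT m ?\<mu> T"
  have TS: "T \<in> SSYT n \<nu>" using T unfolding Sb_def by simp
  have le: "\<And>i. ?\<mu> i \<le> \<nu> i" using muT_le[OF TS] .
  have thk: "theta n \<nu> T k = theta m ?\<mu> ?T' k" if k: "1 \<le> k" "k \<le> m" for k
  proof -
    have "{(i, j). in_shape n \<nu> i j \<and> T i j = k} = {(i, j). in_shape m ?\<mu> i j \<and> ?T' i j = k}"
    proof (rule Set.set_eqI)
      fix p :: "nat \<times> nat"
      obtain i j where p: "p = (i,j)" by (cases p)
      have "in_shape n \<nu> i j \<and> T i j = k \<longleftrightarrow> in_shape m ?\<mu> i j \<and> ?T' i j = k"
      proof
        assume a: "in_shape n \<nu> i j \<and> T i j = k"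
        have "i \<noteq> n"
        proof
          assume "i = n"
          hence "n \<le> T i j" using SSYT_ge_row[OF TS part] a by blast
          thus False using a k n by simp
        qed
        hence i: "1 \<le> i" "i \<le> m" "i \<le> n" using a n unfolding in_shape_def by auto
        have "T i j < n" using a k n by simp
        hence "j \<le> ?\<mu> i" using muT_char[OF TS] i a unfolding in_shape_def by blast
        hence "in_shape m ?\<mu> i j" using i a unfolding in_shape_def by auto
        thus "in_shape m ?\<mu> i j \<and> ?T' i j = k" using a unfolding resT_def by simp
      next
        assume a: "in_shape m ?\<mu> i j \<and> ?T' i j = k"
        thus "in_shape n \<nu> i j \<and> T i j = k" using shape_mn[OF le] unfolding resT_def by auto
      qed
      thus "p \<in> {(i, j). in_shape n \<nu> i j \<and> T i j = k} \<longleftrightarrow> p \<in> {(i, j). in_shape m ?\<mu> i j \<and> ?T' i j = k}"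
        using p by simp
    qed
    thus ?thesis unfolding theta_def by simp
  qed
  have thn: "theta n \<nu> T n = wt n \<nu> ?\<mu>"
  proof -
    have "{(i, j). in_shape n \<nu> i j \<and> T i j = n} = Sigma {1..n} (\<lambda>i. {?\<mu> i + 1..\<nu> i})"
    proof (rule Set.set_eqI)
      fix p :: "nat \<times> nat"
      obtain i j where p: "p = (i,j)" by (cases p)
      have "in_shape n \<nu> i j \<and> T i j = n \<longleftrightarrow> i \<in> {1..n} \<and> j \<in> {?\<mu> i + 1..\<nu> i}"
      proof
        assume a: "in_shape n \<nu> i j \<and> T i j = n"
        hence i: "1 \<le> i" "i \<le> n" "1 \<le> j" "j \<le> \<nu> i" unfolding in_shape_def by auto
        have "\<not> j \<le> ?\<mu> i" using muT_char[OF TS i] a by simp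
        thus "i \<in> {1..n} \<and> j \<in> {?\<mu> i + 1..\<nu> i}" using i by auto
      next
        assume a: "i \<in> {1..n} \<and> j \<in> {?\<mu> i + 1..\<nu> i}"
        hence i: "1 \<le> i" "i \<le> n" "1 \<le> j" "j \<le> \<nu> i" and nj: "\<not> j \<le> ?\<mu> i" by auto
        have "\<not> T i j < n" using muT_char[OF TS i] nj by simp
        moreover have "T i j \<le> n" by (rule SSYT_le[OF TS])
        ultimately show "in_shape n \<nu> i j \<and> T i j = n" using i unfolding in_shape_def by simp
      qed
      thus "p \<in> {(i, j). in_shape n \<nu> i j \<and> T i j = n} \<longleftrightarrow> p \<in> Sigma {1..n} (\<lambda>i. {?\<mu> i + 1..\<nu> i})"
        using p by simp
    qed
    hence "theta n \<nu> T n = card (Sigma {1..n} (\<lambda>i. {?\<mu> i + 1..\<nu> i}))" unfolding theta_def by simp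
    also have "\<dots> = (\<Sum>i=1..n. card {?\<mu> i + 1..\<nu> i})" by (rule card_SigmaI) auto
    also have "\<dots> = wt n \<nu> ?\<mu>" unfolding wt_def by simp
    finally show ?thesis .
  qed
  have "(\<Prod>k = 1..n. x k ^ theta n \<nu> T k) = (\<Prod>k = 1..m. x k ^ theta n \<nu> T k) * x n ^ theta n \<nu> T n"
    using n by (simp add: prod.cl_ivl_Suc)
  also have "(\<Prod>k = 1..m. x k ^ theta n \<nu> T k) = (\<Prod>k = 1..m. x k ^ theta m ?\<mu> ?T' k)"
    by (rule prod.cong) (auto simp: thk)
  finally show ?thesis unfolding thn by (simp add: mult.commute)
qed

lemma P0_finite: "finite P0"
proof -
  let ?K = "\<Sum>i=1..n. \<nu> i"
  have "P0 \<subseteq> {t. (\<forall>a. a \<notin> {1..n} \<longrightarrow> t a = \<nu> a) \<and> (\<forall>a\<in>{1..n}. t a \<le> ?K)}"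
  proof
    fix \<mu> assume mu: "\<mu> \<in> P0"
    hence muQ: "\<mu> \<in> Qs n \<nu> b n" unfolding P0_def by simp
    have "\<forall>a\<in>{1..n}. \<mu> a \<le> ?K"
    proof
      fix a assume a: "a \<in> {1..n}"
      have "\<nu> a \<le> ?K" using a by (intro member_le_sum) auto
      thus "\<mu> a \<le> ?K" using Q_le[OF muQ, of a] by simp
    qed
    thus "\<mu> \<in> {t. (\<forall>a. a \<notin> {1..n} \<longrightarrow> t a = \<nu> a) \<and> (\<forall>a\<in>{1..n}. t a \<le> ?K)}"
      using Q_out[OF muQ] by auto
  qed
  thus ?thesis using fin_funs[of "{1..n}" \<nu> ?K] finite_subset by blast
qed

lemma TD:
  fixes x :: "nat \<Rightarrow> 'a::comm_ring_1"
  shows "row_bound_sum n \<nu> b x = (\<Sum>\<mu>\<in>P0. x n ^ wt n \<nu> \<mu> * row_bound_sum m \<mu> (\<lambda>j. min (b j) m) x)"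
proof -
  let ?W' = "\<lambda>\<mu> T'. (\<Prod>k = 1..m. x k ^ theta m \<mu> T' k)"
  let ?S' = "\<lambda>\<mu>. Sb m \<mu> (\<lambda>j. min (b j) m)"
  have fin': "\<And>\<mu>. finite (?S' \<mu>)" unfolding Sb_def using SSYT_finite by simp
  have "(\<Sum>\<mu>\<in>P0. x n ^ wt n \<nu> \<mu> * row_bound_sum m \<mu> (\<lambda>j. min (b j) m) x)
      = (\<Sum>\<mu>\<in>P0. \<Sum>T'\<in>?S' \<mu>. x n ^ wt n \<nu> \<mu> * ?W' \<mu> T')"
    unfolding rbs_Sb by (simp add: sum_distrib_left)
  also have "\<dots> = (\<Sum>(\<mu>,T')\<in>Sigma P0 ?S'. x n ^ wt n \<nu> \<mu> * ?W' \<mu> T')"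
    by (rule sum.Sigma[OF P0_finite]) (simp add: fin')
  also have "\<dots> = (\<Sum>T\<in>Sb n \<nu> b. \<Prod>k = 1..n. x k ^ theta n \<nu> T k)"
  proof (rule sum.reindex_bij_witness[where i="\<lambda>T. (muT n \<nu> T, resT m (muT n \<nu> T) T)" and j="\<lambda>(\<mu>,T'). extT n m \<nu> \<mu> T'"])
    fix a assume a: "a \<in> Sigma P0 ?S'"
    obtain \<mu> T' where at: "a = (\<mu>, T')" by (cases a)
    have mu: "\<mu> \<in> P0" and T': "T' \<in> ?S' \<mu>" using a at by auto
    show "(muT n \<nu> (case a of (\<mu>, T') \<Rightarrow> extT n m \<nu> \<mu> T'), resT m (muT n \<nu> (case a of (\<mu>, T') \<Rightarrow> extT n m \<nu> \<mu> T')) (case a of (\<mu>, T') \<Rightarrow> extT n m \<nu> \<mu> T')) = a"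
      using Phi_Psi[OF mu T'] at by simp
    show "(case a of (\<mu>, T') \<Rightarrow> extT n m \<nu> \<mu> T') \<in> Sb n \<nu> b"
      using Psi_in[OF mu T'] at by simp
    show "(\<Prod>k = 1..n. x k ^ theta n \<nu> (case a of (\<mu>, T') \<Rightarrow> extT n m \<nu> \<mu> T') k) = (case a of (\<mu>, T') \<Rightarrow> x n ^ wt n \<nu> \<mu> * ?W' \<mu> T')"
      using weight[OF Psi_in[OF mu T'], of x] Phi_Psi[OF mu T'] at by simp
  next
    fix T assume T: "T \<in> Sb n \<nu> b"
    show "(case (muT n \<nu> T, resT m (muT n \<nu> T) T) of (\<mu>, T') \<Rightarrow> extT n m \<nu> \<mu> T') = T"
      using Psi_Phi[OF T] by simp
    show "(muT n \<nu> T, resT m (muT n \<nu> T) T) \<in> Sigma P0 ?S'"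
      using Phi_P0[OF T] Phi_in[OF T] by simp
  qed
  finally show ?thesis unfolding rbs_Sb by simp
qed

end




lemma chain_anti:
  assumes "\<forall>i. 1 \<le> i \<and> i < N \<longrightarrow> (f::nat\<Rightarrow>nat) (Suc i) \<le> f i" "1 \<le> a" "a \<le> k" "k \<le> N"
  shows "f k \<le> f a"
  using assms(3,4)
proof (induction k)
  case 0 thus ?case using assms(2) by simp
next
  case (Suc k)
  show ?case
  proof (cases "a = Suc k")
    case False
    hence "f k \<le> f a" using Suc by simp
    moreover have "f (Suc k) \<le> f k" using assms(1) Suc False assms(2) by force
    ultimately show ?thesis by simp
  qed simp
qed

lemma Q_dec:
  assumes n: "n = Suc m" and part: "is_partition n \<nu>" and bb: "\<forall>j. 1 \<le> j \<and> j \<le> n \<longrightarrow> j \<le> b j \<and> b j \<le> n"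
    and mu: "\<mu> \<in> Qs n \<nu> b n"
  shows "\<forall>i. 1 \<le> i \<and> i < n \<longrightarrow> \<mu> (Suc i) \<le> \<mu> i"
proof (intro allI impI)
  fix i assume i: "1 \<le> i \<and> i < n"
  have "\<mu> (Suc i) \<le> \<nu> (Suc i)" using Q_le[OF n part bb mu] .
  also have "\<nu> (Suc i) \<le> \<mu> i" using Q_ge_next[OF n part bb mu] i by blast
  finally show "\<mu> (Suc i) \<le> \<mu> i" .
qed

lemma rbs_zero: "row_bound_sum 0 \<nu> b x = 1"
proof -
  have "Sb 0 \<nu> b = {\<lambda>i j. 0}"
    unfolding Sb_def SSYT_def in_shape_def by auto
  thus ?thesis unfolding rbs_Sb by simp
qed

lemma hmat_zero: "hmat 0 c b x = 1"
  unfolding hmat_def by (simp add: det_dim_zero)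

lemma FJT:
  fixes x :: "nat \<Rightarrow> 'a::comm_ring_1"
  shows "is_partition n \<nu> \<Longrightarrow> (\<forall>j. 1 \<le> j \<and> j \<le> n \<longrightarrow> j \<le> b j \<and> b j \<le> n)
    \<Longrightarrow> (\<forall>j. 1 \<le> j \<and> j < n \<longrightarrow> b j \<le> b (j+1))
    \<Longrightarrow> row_bound_sum n \<nu> b x = hmat n (\<lambda>j. int (\<nu> j) - int j) b x"
proof (induction n arbitrary: \<nu> b)
  case 0 thus ?case by (simp add: rbs_zero hmat_zero)
next
  case (Suc m)
  define n where "n = Suc m"
  have n: "n = Suc m" by (simp add: n_def)
  have part: "is_partition n \<nu>" and bb: "\<forall>j. 1 \<le> j \<and> j \<le> n \<longrightarrow> j \<le> b j \<and> b j \<le> n"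
    and mono: "\<forall>j. 1 \<le> j \<and> j < n \<longrightarrow> b j \<le> b (j+1)" using Suc.prems n by auto
  let ?b' = "\<lambda>j. min (b j) m"
  let ?B = "\<lambda>j. if j \<le> n then min (b j) m else b j"
  have "hmat n (\<lambda>j. int (\<nu> j) - int j) b x
      = (\<Sum>\<mu>\<in>Qs n \<nu> b n. x n ^ wt n \<nu> \<mu> * hmat n (\<lambda>j. int (\<mu> j) - int j) ?B x)"
    by (rule pieri[OF n part bb mono]) simp
  also have "\<dots> = (\<Sum>\<mu>\<in>P0 n \<nu> b. x n ^ wt n \<nu> \<mu> * hmat n (\<lambda>j. int (\<mu> j) - int j) ?B x)"
  proof (rule sum.mono_neutral_right)
    show "finite (Qs n \<nu> b n)"
    proof -
      let ?K = "\<Sum>i=1..n. \<nu> i"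
      have "Qs n \<nu> b n \<subseteq> {t. (\<forall>a. a \<notin> {1..n} \<longrightarrow> t a = \<nu> a) \<and> (\<forall>a\<in>{1..n}. t a \<le> ?K)}"
      proof
        fix \<mu> assume muQ: "\<mu> \<in> Qs n \<nu> b n"
        have "\<forall>a\<in>{1..n}. \<mu> a \<le> ?K"
        proof
          fix a assume a: "a \<in> {1..n}"
          have "\<nu> a \<le> ?K" using a by (intro member_le_sum) auto
          thus "\<mu> a \<le> ?K" using Q_le[OF n part bb muQ, of a] by simp
        qed
        thus "\<mu> \<in> {t. (\<forall>a. a \<notin> {1..n} \<longrightarrow> t a = \<nu> a) \<and> (\<forall>a\<in>{1..n}. t a \<le> ?K)}"
          using Q_out[OF n part bb muQ] by auto
      qed
      thus ?thesis using fin_funs[of "{1..n}" \<nu> ?K] finite_subset by blast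
    qed
    show "P0 n \<nu> b \<subseteq> Qs n \<nu> b n" unfolding P0_def[OF n part bb] by auto
    show "\<forall>\<mu>\<in>Qs n \<nu> b n - P0 n \<nu> b. x n ^ wt n \<nu> \<mu> * hmat n (\<lambda>j. int (\<mu> j) - int j) ?B x = 0"
    proof
      fix \<mu> assume mu: "\<mu> \<in> Qs n \<nu> b n - P0 n \<nu> b"
      hence muQ: "\<mu> \<in> Qs n \<nu> b n" and mun: "\<mu> n > 0" unfolding P0_def[OF n part bb] by auto
      have dec: "\<forall>i. 1 \<le> i \<and> i < n \<longrightarrow> \<mu> (Suc i) \<le> \<mu> i" by (rule Q_dec[OF n part bb muQ])
      have "hmat n (\<lambda>j. int (\<mu> j) - int j) ?B x = 0"
        unfolding hmat_def
      proof (rule det_zero_row[of m])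
        show "m < n" using n by simp
        fix j assume j: "j < n"
        have "\<mu> n \<le> \<mu> (j+1)" by (rule chain_anti[OF dec]) (use j in auto)
        hence pos: "int (\<mu> (j+1)) - int (j+1) + int (m+1) > 0" using mun j n by linarith
        have "?B (j+1) < m + 1" using j n by simp
        thus "hcomp (int (\<mu> (j+1)) - int (j+1) + int (m+1)) (m+1) (?B (j+1)) x = 0"
          using hcomp_empty[OF pos] by blast
      qed
      thus "x n ^ wt n \<nu> \<mu> * hmat n (\<lambda>j. int (\<mu> j) - int j) ?B x = 0" by simp
    qed
  qed
  also have "\<dots> = (\<Sum>\<mu>\<in>P0 n \<nu> b. x n ^ wt n \<nu> \<mu> * row_bound_sum m \<mu> ?b' x)"
  proof (rule sum.cong[OF refl])
    fix \<mu> assume mu: "\<mu> \<in> P0 n \<nu> b"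
    hence muQ: "\<mu> \<in> Qs n \<nu> b n" and mun: "\<mu> n = 0" unfolding P0_def[OF n part bb] by auto
    have dec: "\<forall>i. 1 \<le> i \<and> i < n \<longrightarrow> \<mu> (Suc i) \<le> \<mu> i" by (rule Q_dec[OF n part bb muQ])
    have "hmat n (\<lambda>j. int (\<mu> j) - int j) ?B x
        = det (mat m m (\<lambda>(i,j). hcomp (int (\<mu> (j+1)) - int (j+1) + int (i+1)) (i+1) (?B (j+1)) x))"
      unfolding hmat_def
    proof (rule det_last_row[OF n])
      fix j assume j: "j < n"
      show "hcomp (int (\<mu> (j+1)) - int (j+1) + int (m+1)) (m+1) (?B (j+1)) x = (if j = m then 1 else 0)"
      proof (cases "j = m")
        case True thus ?thesis using mun n by simp
      next
        case False
        hence pos: "int (\<mu> (j+1)) - int (j+1) + int (m+1) > 0" using j n by linarith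
        have bnd: "?B (j+1) < m + 1" using j n by simp
        have "hcomp (int (\<mu> (j+1)) - int (j+1) + int (m+1)) (m+1) (?B (j+1)) x = 0"
          by (rule hcomp_empty[OF pos bnd])
        thus ?thesis using False by simp
      qed
    qed
    also have "\<dots> = hmat m (\<lambda>j. int (\<mu> j) - int j) ?b' x"
      unfolding hmat_def using n by (intro arg_cong[where f=det] eq_matI) auto
    also have "\<dots> = row_bound_sum m \<mu> ?b' x"
    proof (rule Suc.IH[symmetric])
      show "is_partition m \<mu>" unfolding is_partition_def using dec n by auto
      show "\<forall>j. 1 \<le> j \<and> j \<le> m \<longrightarrow> j \<le> min (b j) m \<and> min (b j) m \<le> m" using bb n by auto
      show "\<forall>j. 1 \<le> j \<and> j < m \<longrightarrow> min (b j) m \<le> min (b (j+1)) m" using mono n by fastforce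
    qed
    finally show "x n ^ wt n \<nu> \<mu> * hmat n (\<lambda>j. int (\<mu> j) - int j) ?B x = x n ^ wt n \<nu> \<mu> * row_bound_sum m \<mu> ?b' x"
      by simp
  qed
  also have "\<dots> = row_bound_sum n \<nu> b x"
    by (rule TD[OF n part bb, symmetric])
  finally show ?case unfolding n_def by simp
qed




section \<open>critical indices\<close>

lemma crit_range: "is_crit lo hi \<beta> c \<Longrightarrow> lo < hi \<Longrightarrow> lo < c \<and> c \<le> hi"
  by (induction rule: is_crit.induct) auto

lemma crit_parent:
  assumes "is_crit lo hi \<beta> c" "c \<noteq> hi"
  shows "\<exists>w. is_crit lo hi \<beta> w \<and> c < w \<and> jump \<beta> w c \<and> (\<forall>x'. lo < x' \<and> x' < w \<and> jump \<beta> w x' \<longrightarrow> x' \<le> c)"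
  using assms by (cases rule: is_crit.cases) auto

lemma crit_next:
  assumes y: "is_crit lo hi \<beta> y" and i: "lo < i" "i < y" "jump \<beta> y i"
  shows "\<exists>c. is_crit lo hi \<beta> c \<and> i \<le> c \<and> c < y"
proof -
  let ?X = "{x'. lo < x' \<and> x' < y \<and> jump \<beta> y x'}"
  have fin: "finite ?X" by (rule finite_subset[of _ "{..<y}"]) auto
  have iX: "i \<in> ?X" using i by simp
  let ?c = "Max ?X"
  have cX: "?c \<in> ?X" using fin iX by (intro Max_in) auto
  have ic: "i \<le> ?c" using fin iX by simp
  have "is_crit lo hi \<beta> ?c"
  proof (rule is_crit.step[OF y])
    show "lo < ?c" "?c < y" "jump \<beta> y ?c" using cX by auto
    show "\<forall>x'. lo < x' \<and> x' < y \<and> jump \<beta> y x' \<longrightarrow> x' \<le> ?c" using fin by auto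
  qed
  thus ?thesis using ic cX by blast
qed

section \<open>carrels\<close>

context
  fixes n :: nat and lam :: "nat \<Rightarrow> nat"
  assumes n1: "1 \<le> n" and part: "is_partition n lam"
begin

abbreviation "LL \<equiv> sorted_list_of_set (Rset n lam \<union> {0, n})"

lemma R_sub: "q \<in> Rset n lam \<Longrightarrow> 1 \<le> q \<and> q < n"
  unfolding Rset_def using n1 by auto

lemma R_fin: "finite (Rset n lam)"
  by (rule finite_subset[of _ "{..n}"]) (auto simp: Rset_def)

lemma LL_set: "set LL = Rset n lam \<union> {0, n}"
proof -
  have "finite (Rset n lam \<union> {0, n})" using R_fin by simp
  thus ?thesis by (metis set_sorted_list_of_set subset_UNIV)
qed

lemma LL_len: "length LL = rr n lam + 2"
proof -
  have z: "0 \<notin> Rset n lam" and nn: "n \<notin> Rset n lam" using R_sub by force+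
  have e: "Rset n lam \<union> {0, n} = insert 0 (insert n (Rset n lam))" by auto
  have c1: "card (insert n (Rset n lam)) = Suc (card (Rset n lam))"
    by (rule card_insert_disjoint[OF R_fin nn])
  have c2: "card (insert 0 (insert n (Rset n lam))) = Suc (card (insert n (Rset n lam)))"
    by (rule card_insert_disjoint) (use R_fin z n1 in auto)
  have "length LL = card (Rset n lam \<union> {0, n})" by (metis length_sorted_list_of_set subset_UNIV)
  thus ?thesis unfolding rr_def e c2 c1 by simp
qed

lemma LL_sorted: "sorted_wrt (<) LL"
  using strict_sorted_list_of_set[of "Rset n lam \<union> {0, n}"] by simp

lemma qq_mono: "h < h' \<Longrightarrow> h' \<le> rr n lam + 1 \<Longrightarrow> qq n lam h < qq n lam h'"
  unfolding qq_def using sorted_wrt_nth_less[OF LL_sorted] LL_len by simp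

lemma qq_mono_le: "h \<le> h' \<Longrightarrow> h' \<le> rr n lam + 1 \<Longrightarrow> qq n lam h \<le> qq n lam h'"
  using qq_mono by (cases "h = h'") (auto simp: less_imp_le)

lemma qq_in: "h \<le> rr n lam + 1 \<Longrightarrow> qq n lam h \<in> Rset n lam \<union> {0, n}"
proof -
  assume h: "h \<le> rr n lam + 1"
  have "LL ! h \<in> set LL" using h LL_len by (intro nth_mem) simp
  thus ?thesis unfolding qq_def LL_set .
qed

lemma qq_le: "h \<le> rr n lam + 1 \<Longrightarrow> qq n lam h \<le> n"
  using qq_in R_sub by fastforce

lemma in_qq: "q \<in> Rset n lam \<union> {0, n} \<Longrightarrow> \<exists>h \<le> rr n lam + 1. qq n lam h = q"
proof -
  assume "q \<in> Rset n lam \<union> {0, n}"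
  hence "q \<in> set LL" using LL_set by simp
  then obtain h where "h < length LL" "LL ! h = q" by (auto simp: in_set_conv_nth)
  thus ?thesis using LL_len unfolding qq_def by (intro exI[of _ h]) auto
qed

lemma qq_0: "qq n lam 0 = 0"
proof -
  obtain h where h: "h \<le> rr n lam + 1" "qq n lam h = 0" using in_qq[of 0] by auto
  show ?thesis using qq_mono_le[of 0 h] h by simp
qed

lemma qq_last: "qq n lam (rr n lam + 1) = n"
proof -
  obtain h where h: "h \<le> rr n lam + 1" "qq n lam h = n" using in_qq[of n] by auto
  show ?thesis using qq_mono_le[of h "rr n lam + 1"] h qq_le[of "rr n lam + 1"] by simp
qed

lemma carrel_char:
  assumes h: "1 \<le> h" "h \<le> rr n lam + 1" and i: "qq n lam (h-1) < i" "i \<le> qq n lam h"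
  shows "carrel_of n lam i = h"
  unfolding carrel_of_def
proof (rule the_equality)
  show "1 \<le> h \<and> h \<le> rr n lam + 1 \<and> qq n lam (h - 1) < i \<and> i \<le> qq n lam h" using h i by simp
  fix h' assume h': "1 \<le> h' \<and> h' \<le> rr n lam + 1 \<and> qq n lam (h' - 1) < i \<and> i \<le> qq n lam h'"
  show "h' = h"
  proof (rule ccontr)
    assume "h' \<noteq> h"
    hence "h' < h \<or> h < h'" by auto
    thus False
    proof
      assume "h' < h"
      hence a1: "h' \<le> h - 1" by simp
      have a2: "h - 1 \<le> rr n lam + 1" using h diff_le_self le_trans by blast
      have "qq n lam h' \<le> qq n lam (h-1)" by (rule qq_mono_le[OF a1 a2])
      thus False using h' i by simp
    next
      assume "h < h'"
      hence a1: "h \<le> h' - 1" by simp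
      have a2: "h' - 1 \<le> rr n lam + 1" using h' diff_le_self le_trans by blast
      have "qq n lam h \<le> qq n lam (h'-1)" by (rule qq_mono_le[OF a1 a2])
      thus False using h' i by simp
    qed
  qed
qed

lemma carrel_ex:
  assumes i: "1 \<le> i" "i \<le> n"
  shows "1 \<le> carrel_of n lam i \<and> carrel_of n lam i \<le> rr n lam + 1
       \<and> qq n lam (carrel_of n lam i - 1) < i \<and> i \<le> qq n lam (carrel_of n lam i)"
proof -
  let ?h = "LEAST h. i \<le> qq n lam h"
  have ex: "i \<le> qq n lam (rr n lam + 1)" using qq_last i by simp
  have hle: "?h \<le> rr n lam + 1" using ex by (rule Least_le)
  have ih: "i \<le> qq n lam ?h" using ex by (rule LeastI)
  have h1: "1 \<le> ?h"
  proof (rule ccontr)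
    assume "\<not> 1 \<le> ?h"
    hence "?h = 0" by simp
    thus False using ih qq_0 i by simp
  qed
  have lt: "qq n lam (?h - 1) < i"
  proof (rule ccontr)
    assume "\<not> qq n lam (?h - 1) < i"
    hence "i \<le> qq n lam (?h - 1)" by simp
    hence "?h \<le> ?h - 1" by (rule Least_le)
    thus False using h1 by simp
  qed
  have "carrel_of n lam i = ?h" by (rule carrel_char[OF h1 hle lt ih])
  thus ?thesis using h1 hle lt ih by simp
qed

lemma lam_flat:
  assumes h: "1 \<le> h" "h \<le> rr n lam + 1" and i: "qq n lam (h-1) < i" "i < qq n lam h"
  shows "lam (i+1) = lam i"
proof -
  have "i \<notin> Rset n lam"
  proof
    assume "i \<in> Rset n lam"
    then obtain t where t: "t \<le> rr n lam + 1" "qq n lam t = i" using in_qq by blast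
    have "h - 1 < t"
    proof (rule ccontr)
      assume "\<not> h - 1 < t"
      hence "qq n lam t \<le> qq n lam (h-1)" using qq_mono_le[of t "h-1"] h by simp
      thus False using t i by simp
    qed
    moreover have "t < h"
    proof (rule ccontr)
      assume "\<not> t < h"
      hence "qq n lam h \<le> qq n lam t" using qq_mono_le[of h t] t by simp
      thus False using t i by simp
    qed
    ultimately show False by simp
  qed
  moreover have "1 \<le> i" "i < n" using i qq_le[OF h(2)] by auto
  ultimately have "\<not> lam (i+1) < lam i" unfolding Rset_def by auto
  moreover have "lam (i+1) \<le> lam i" using part \<open>1 \<le> i\<close> \<open>i < n\<close> unfolding is_partition_def by simp
  ultimately show ?thesis by simp
qed

end

lemma const_chain:
  assumes "\<forall>j. a \<le> j \<and> j < b \<longrightarrow> (f::nat\<Rightarrow>nat) (j+1) = f j"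
  shows "a \<le> j \<Longrightarrow> j \<le> b \<Longrightarrow> f j = f b"
proof (induction "b - j" arbitrary: j)
  case 0 thus ?case by simp
next
  case (Suc q)
  hence "j < b" by simp
  hence "f (j+1) = f b" using Suc by simp
  moreover have "f (j+1) = f j" using assms Suc.prems \<open>j < b\<close> by simp
  ultimately show ?case by simp
qed

lemma hcomp_rec2:
  fixes x :: "nat \<Rightarrow> 'a::comm_ring_1"
  assumes "i \<le> Suc k \<or> u \<noteq> 1"
  shows "hcomp u i (Suc k) x = hcomp u i k x + x (Suc k) * hcomp (u - 1) i (Suc k) x"
proof (cases "i \<le> Suc k")
  case True thus ?thesis by (rule hcomp_rec)
next
  case False
  hence u1: "u \<noteq> 1" and ik: "Suc k < i" "k < i" using assms by auto
  show ?thesis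
  proof (cases "u < 0")
    case True thus ?thesis by simp
  next
    case nneg: False
    show ?thesis
    proof (cases "u = 0")
      case True thus ?thesis by simp
    next
      case False
      hence u: "u > 1" using nneg u1 by simp
      have a: "hcomp u i (Suc k) x = 0" by (rule hcomp_empty) (use u ik in auto)
      have b: "hcomp u i k x = 0" by (rule hcomp_empty) (use u ik in auto)
      have c: "hcomp (u - 1) i (Suc k) x = 0" by (rule hcomp_empty) (use u ik in auto)
      show ?thesis using a b c by simp
    qed
  qed
qed

definition Vc :: "(nat \<Rightarrow> nat) \<Rightarrow> (nat \<Rightarrow> 'a::comm_ring_1) \<Rightarrow> nat \<Rightarrow> nat \<Rightarrow> nat \<Rightarrow> 'a" where
  "Vc lam x j t i0 = hcomp (int (lam j) - int j + int (i0+1)) (i0+1) t x"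

lemma D1:
  fixes x :: "nat \<Rightarrow> 'a::comm_ring_1"
  assumes lj: "lam (j+1) = lam j" and rj: "j \<le> r"
  shows "r \<le> t \<Longrightarrow> Vc lam x j t i0 = Vc lam x j r i0 + (\<Sum>s=Suc r..t. x s * Vc lam x (j+1) s i0)"
proof (induction t)
  case 0 thus ?case by simp
next
  case (Suc t)
  show ?case
  proof (cases "Suc t = r")
    case True thus ?thesis by simp
  next
    case False
    hence rt: "r \<le> t" using Suc.prems by simp
    let ?u = "int (lam j) - int j + int (i0+1)"
    have cond: "i0 + 1 \<le> Suc t \<or> ?u \<noteq> 1" using rt rj by auto
    have "Vc lam x j (Suc t) i0 = Vc lam x j t i0 + x (Suc t) * hcomp (?u - 1) (i0+1) (Suc t) x"
      unfolding Vc_def by (rule hcomp_rec2[OF cond])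
    also have "?u - 1 = int (lam (j+1)) - int (j+1) + int (i0+1)" using lj by simp
    also have "Vc lam x j t i0 = Vc lam x j r i0 + (\<Sum>s=Suc r..t. x s * Vc lam x (j+1) s i0)"
      using Suc.IH rt by simp
    finally show ?thesis using rt by (simp add: Vc_def sum.cl_ivl_Suc add.assoc)
  qed
qed

lemma SP:
  fixes x :: "nat \<Rightarrow> 'a::comm_ring_1"
  assumes flat: "\<forall>j. p \<le> j \<and> j < k \<longrightarrow> lam (j+1) = lam j" and kb: "k \<le> B"
  shows "p \<le> j \<Longrightarrow> j \<le> k \<Longrightarrow> int B - (int k - int j) \<le> int r \<Longrightarrow> r \<le> B
    \<Longrightarrow> \<exists>d. d j = 1 \<and> (\<forall>i0. Vc lam x j r i0 = (\<Sum>l\<in>{j..k}. d l * Vc lam x l B i0))"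
proof (induction "k - j" arbitrary: j r)
  case 0
  hence jk: "j = k" and rB: "r = B" by auto
  show ?case
    by (rule exI[of _ "\<lambda>l. if l = k then 1 else 0"]) (simp add: jk rB)
next
  case (Suc q)
  hence jk: "j < k" by simp
  have rj: "j \<le> r" using Suc.prems kb by linarith
  have lj: "lam (j+1) = lam j" using flat Suc.prems jk by simp
  have "\<forall>s\<in>{Suc r..B}. \<exists>d. d (j+1) = 1 \<and> (\<forall>i0. Vc lam x (j+1) s i0 = (\<Sum>l\<in>{j+1..k}. d l * Vc lam x l B i0))"
  proof
    fix s assume s: "s \<in> {Suc r..B}"
    show "\<exists>d. d (j+1) = 1 \<and> (\<forall>i0. Vc lam x (j+1) s i0 = (\<Sum>l\<in>{j+1..k}. d l * Vc lam x l B i0))"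
      by (rule Suc.hyps(1)) (use Suc.hyps(2) Suc.prems jk s in auto)
  qed
  then obtain D where D: "\<forall>s\<in>{Suc r..B}. D s (j+1) = 1 \<and> (\<forall>i0. Vc lam x (j+1) s i0 = (\<Sum>l\<in>{j+1..k}. D s l * Vc lam x l B i0))"
    by (metis bchoice)
  define d where "d l = (if l = j then 1 else - (\<Sum>s=Suc r..B. x s * D s l))" for l
  have "\<forall>i0. Vc lam x j r i0 = (\<Sum>l\<in>{j..k}. d l * Vc lam x l B i0)"
  proof
    fix i0
    have "(\<Sum>l\<in>{j..k}. d l * Vc lam x l B i0) = d j * Vc lam x j B i0 + (\<Sum>l\<in>{Suc j..k}. d l * Vc lam x l B i0)"
      using jk by (simp add: sum.atLeast_Suc_atMost)
    also have "(\<Sum>l\<in>{Suc j..k}. d l * Vc lam x l B i0) = - (\<Sum>l\<in>{Suc j..k}. \<Sum>s=Suc r..B. x s * (D s l * Vc lam x l B i0))"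
      unfolding d_def by (simp add: sum_negf sum_distrib_right mult.assoc)
    also have "(\<Sum>l\<in>{Suc j..k}. \<Sum>s=Suc r..B. x s * (D s l * Vc lam x l B i0)) = (\<Sum>s=Suc r..B. x s * (\<Sum>l\<in>{Suc j..k}. D s l * Vc lam x l B i0))"
      by (subst sum.swap) (simp add: sum_distrib_left)
    also have "\<dots> = (\<Sum>s=Suc r..B. x s * Vc lam x (j+1) s i0)"
      by (rule sum.cong[OF refl]) (use D in auto)
    finally have "(\<Sum>l\<in>{j..k}. d l * Vc lam x l B i0) = Vc lam x j B i0 - (\<Sum>s=Suc r..B. x s * Vc lam x (j+1) s i0)"
      unfolding d_def by simp
    also have "\<dots> = Vc lam x j r i0" using D1[OF lj rj, of B x i0] Suc.prems by simp
    finally show "Vc lam x j r i0 = (\<Sum>l\<in>{j..k}. d l * Vc lam x l B i0)" by simp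
  qed
  moreover have "d j = 1" by (simp add: d_def)
  ultimately show ?case by blast
qed

lemma col_chain:
  assumes T: "T \<in> SSYT n \<nu>" and part: "is_partition n \<nu>" and i: "1 \<le> i"
  shows "i \<le> k \<Longrightarrow> k \<le> n \<Longrightarrow> 1 \<le> c \<Longrightarrow> c \<le> \<nu> k \<Longrightarrow> T i c + (k - i) \<le> T k c"
proof (induction k)
  case 0 thus ?case by simp
next
  case (Suc k)
  show ?case
  proof (cases "i = Suc k")
    case True thus ?thesis by simp
  next
    case False
    hence ik: "i \<le> k" using Suc.prems by simp
    have sh: "in_shape n \<nu> (Suc k) c" using Suc.prems unfolding in_shape_def by auto
    have sh2: "in_shape n \<nu> k c" using in_shape_up[OF part sh] ik i by simp
    have "T i c + (k - i) \<le> T k c" using Suc.IH ik Suc.prems sh2 unfolding in_shape_def by auto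
    moreover have "T k c < T (Suc k) c" using SSYT_col[OF T sh2] sh by simp
    ultimately show ?thesis using ik by simp
  qed
qed

context
  fixes n :: nat and lam \<beta> :: "nat \<Rightarrow> nat"
  assumes n1: "1 \<le> n" and part: "is_partition n lam" and up: "upper_tuple n \<beta>"
    and ugc: "flag_critical n lam \<beta>"
    and ubp: "\<forall>i. 1 \<le> i \<and> i \<le> n \<longrightarrow> \<beta> i \<le> platform n lam \<beta> i"
begin

abbreviation "lo i \<equiv> qq n lam (carrel_of n lam i - 1)"
abbreviation "hi i \<equiv> qq n lam (carrel_of n lam i)"

lemma lohi: "1 \<le> i \<Longrightarrow> i \<le> n \<Longrightarrow> lo i < i \<and> i \<le> hi i \<and> hi i \<le> n"
  using carrel_ex[OF n1 part] qq_le[OF n1 part] by auto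

lemma xcrit_props:
  assumes p: "1 \<le> p" "p \<le> n"
  shows "is_crit (lo p) (hi p) \<beta> (xcrit n lam \<beta> p) \<and> p \<le> xcrit n lam \<beta> p \<and> xcrit n lam \<beta> p \<le> hi p
     \<and> (\<forall>c. is_crit (lo p) (hi p) \<beta> c \<and> p \<le> c \<longrightarrow> xcrit n lam \<beta> p \<le> c)"
proof -
  have ex: "is_crit (lo p) (hi p) \<beta> (hi p) \<and> p \<le> hi p" using lohi[OF p] is_crit.start by blast
  have x: "xcrit n lam \<beta> p = (LEAST c. is_crit (lo p) (hi p) \<beta> c \<and> p \<le> c)"
    unfolding xcrit_def crit_in_def by simp
  let ?P = "\<lambda>c. is_crit (lo p) (hi p) \<beta> c \<and> p \<le> c"
  have L1: "?P (LEAST c. ?P c)" by (rule LeastI[of ?P "hi p"]) (rule ex)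
  have L2: "(LEAST c. ?P c) \<le> hi p" by (rule Least_le[of ?P "hi p"]) (rule ex)
  have L3: "\<forall>c. ?P c \<longrightarrow> (LEAST c. ?P c) \<le> c" by (auto intro: Least_le)
  show ?thesis unfolding x using L1 L2 L3 by blast
qed

lemma same_carrel:
  assumes p: "1 \<le> p" "p \<le> l" "l \<le> hi p" and pn: "p \<le> n"
  shows "carrel_of n lam l = carrel_of n lam p"
  using carrel_char[OF n1 part, of "carrel_of n lam p" l] carrel_ex[OF n1 part, of p] p pn by auto

lemma xcrit_const:
  assumes p: "1 \<le> p" "p \<le> n" and l: "p \<le> l" "l \<le> xcrit n lam \<beta> p"
  shows "xcrit n lam \<beta> l = xcrit n lam \<beta> p"
proof -
  let ?k = "xcrit n lam \<beta> p"
  have P: "is_crit (lo p) (hi p) \<beta> ?k" "p \<le> ?k" "?k \<le> hi p"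
    "\<forall>c. is_crit (lo p) (hi p) \<beta> c \<and> p \<le> c \<longrightarrow> ?k \<le> c" using xcrit_props[OF p] by auto
  have c: "carrel_of n lam l = carrel_of n lam p" using same_carrel[of p l] p l P by simp
  have x: "xcrit n lam \<beta> l = (LEAST c. is_crit (lo p) (hi p) \<beta> c \<and> l \<le> c)"
    unfolding xcrit_def crit_in_def c by simp
  show ?thesis unfolding x
    by (rule Least_equality) (use P l in auto)
qed

lemma lam_const:
  assumes p: "1 \<le> p" "p \<le> n" and j: "p \<le> j" "j \<le> xcrit n lam \<beta> p"
  shows "lam j = lam (xcrit n lam \<beta> p)"
proof -
  let ?k = "xcrit n lam \<beta> p"
  have P: "?k \<le> hi p" using xcrit_props[OF p] by auto
  have "\<forall>j. p \<le> j \<and> j < ?k \<longrightarrow> lam (j+1) = lam j"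
  proof (intro allI impI)
    fix j assume j: "p \<le> j \<and> j < ?k"
    show "lam (j+1) = lam j"
      by (rule lam_flat[OF n1 part, of "carrel_of n lam p"]) (use carrel_ex[OF n1 part, of p] p j P in auto)
  qed
  thus ?thesis using const_chain j by blast
qed

lemma F2:
  assumes p: "1 \<le> p" "p \<le> n" and j: "p \<le> j" "j \<le> xcrit n lam \<beta> p"
  shows "int (\<beta> (xcrit n lam \<beta> p)) - int (\<beta> j) \<le> int (xcrit n lam \<beta> p) - int j"
proof (cases "j = xcrit n lam \<beta> p")
  case False
  let ?k = "xcrit n lam \<beta> p"
  have P: "is_crit (lo p) (hi p) \<beta> ?k"
    "\<forall>c. is_crit (lo p) (hi p) \<beta> c \<and> p \<le> c \<longrightarrow> ?k \<le> c" using xcrit_props[OF p] by auto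
  show ?thesis
  proof (rule ccontr)
    assume "\<not> ?thesis"
    hence jmp: "jump \<beta> ?k j" unfolding jump_def by simp
    have "lo p < j" using lohi[OF p] j by simp
    then obtain c where c: "is_crit (lo p) (hi p) \<beta> c" "j \<le> c" "c < ?k"
      using crit_next[OF P(1) _ _ jmp] j False by force
    thus False using P(2) j by force
  qed
qed simp

lemma xi_eq: "platform n lam \<beta> i = \<beta> (xcrit n lam \<beta> i)"
  unfolding platform_def by simp

lemma xi_bounds:
  assumes p: "1 \<le> p" "p \<le> n"
  shows "p \<le> \<beta> (xcrit n lam \<beta> p) \<and> \<beta> (xcrit n lam \<beta> p) \<le> n"
proof -
  let ?k = "xcrit n lam \<beta> p"
  have k: "p \<le> ?k" "?k \<le> n" using xcrit_props[OF p] lohi[OF p] by auto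
  hence "1 \<le> ?k" using p by simp
  hence "?k \<le> \<beta> ?k \<and> \<beta> ?k \<le> n" using up k unfolding upper_tuple_def by blast
  thus ?thesis using k by simp
qed

lemma xi_mono:
  assumes i: "1 \<le> i" "i < n"
  shows "\<beta> (xcrit n lam \<beta> i) \<le> \<beta> (xcrit n lam \<beta> (i+1))"
proof -
  have i': "1 \<le> i" "i \<le> n" using i by auto
  have i1: "1 \<le> i+1" "i+1 \<le> n" using i by auto
  let ?k = "xcrit n lam \<beta> i"
  have P: "is_crit (lo i) (hi i) \<beta> ?k" "i \<le> ?k" "?k \<le> hi i"
    "\<forall>c. is_crit (lo i) (hi i) \<beta> c \<and> i \<le> c \<longrightarrow> ?k \<le> c" using xcrit_props[OF i'] by auto
  have LH: "lo i < i" "i \<le> hi i" "hi i \<le> n" using lohi[OF i'] by auto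
  show ?thesis
  proof (cases "i < hi i")
    case True
    have c1: "carrel_of n lam (i+1) = carrel_of n lam i" using same_carrel[of i "i+1"] True i by simp
    show ?thesis
    proof (cases "i < ?k")
      case True
      have "xcrit n lam \<beta> (i+1) = ?k" using xcrit_const[OF i', of "i+1"] True by simp
      thus ?thesis by simp
    next
      case False
      hence ki: "?k = i" using P by simp
      have ic: "is_crit (lo i) (hi i) \<beta> i" using P(1) ki by simp
      obtain w where w: "is_crit (lo i) (hi i) \<beta> w" "i < w" "jump \<beta> w i"
        "\<forall>x'. lo i < x' \<and> x' < w \<and> jump \<beta> w x' \<longrightarrow> x' \<le> i"
        using crit_parent[OF ic] True by auto
      let ?y = "xcrit n lam \<beta> (i+1)"
      have Y: "is_crit (lo i) (hi i) \<beta> ?y" "i+1 \<le> ?y"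
        "\<forall>c. is_crit (lo i) (hi i) \<beta> c \<and> i+1 \<le> c \<longrightarrow> ?y \<le> c"
        using xcrit_props[OF i1] c1 by auto
      have yw: "?y \<le> w" using Y(3) w by simp
      have "int (\<beta> i) < int (\<beta> ?y)"
      proof (cases "?y = w")
        case True thus ?thesis using w(2,3) unfolding jump_def by simp
      next
        case False
        hence "?y < w" using yw by simp
        have "\<not> jump \<beta> w ?y"
        proof
          assume "jump \<beta> w ?y"
          moreover have "lo i < ?y" using LH Y(2) by simp
          ultimately have "?y \<le> i" using w(4) \<open>?y < w\<close> by blast
          thus False using Y(2) by simp
        qed
        thus ?thesis using w(3) Y(2) \<open>?y < w\<close> unfolding jump_def by simp
      qed
      thus ?thesis using ki by simp
    qed
  next
    case False
    hence ihi: "hi i = i" using LH by simp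
    let ?h = "carrel_of n lam i"
    have H: "1 \<le> ?h" "?h \<le> rr n lam + 1" using carrel_ex[OF n1 part i'] by auto
    have hr: "?h \<le> rr n lam"
    proof (rule ccontr)
      assume "\<not> ?h \<le> rr n lam"
      hence "?h = rr n lam + 1" using H by simp
      hence "hi i = n" using qq_last[OF n1 part] by simp
      thus False using ihi i by simp
    qed
    have qlt: "qq n lam ?h < qq n lam (?h + 1)" using qq_mono[OF n1 part, of ?h "?h+1"] hr by simp
    have c1: "carrel_of n lam (i+1) = ?h + 1"
      by (rule carrel_char[OF n1 part]) (use hr ihi qlt in auto)
    have ki: "?k = i" using P ihi by simp
    have x1: "xcrit n lam \<beta> (i+1) = (LEAST c. is_crit (qq n lam ?h) (qq n lam (?h+1)) \<beta> c \<and> i+1 \<le> c)"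
      unfolding xcrit_def crit_in_def c1 by simp
    have eqP: "(\<lambda>c. is_crit (qq n lam ?h) (qq n lam (?h+1)) \<beta> c \<and> i+1 \<le> c) = (\<lambda>c. is_crit (qq n lam ?h) (qq n lam (?h+1)) \<beta> c)"
    proof (intro ext iffI)
      fix c assume "is_crit (qq n lam ?h) (qq n lam (?h+1)) \<beta> c"
      thus "is_crit (qq n lam ?h) (qq n lam (?h+1)) \<beta> c \<and> i+1 \<le> c"
        using crit_range[of "qq n lam ?h" "qq n lam (?h+1)" \<beta> c] qlt ihi by auto
    qed simp
    have fl: "\<beta> (qq n lam ?h) \<le> \<beta> (LEAST x. crit_in n lam \<beta> (?h+1) x)"
      using ugc hr H unfolding flag_critical_def by auto
    have "(LEAST x. crit_in n lam \<beta> (?h+1) x) = xcrit n lam \<beta> (i+1)"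
      unfolding x1 eqP crit_in_def by simp
    thus ?thesis using fl ki ihi by simp
  qed
qed

lemma Sb_eq: "Sb n lam \<beta> = Sb n lam (platform n lam \<beta>)"
proof -
  have "(\<forall>i j. in_shape n lam i j \<longrightarrow> T i j \<le> \<beta> i) \<longleftrightarrow> (\<forall>i j. in_shape n lam i j \<longrightarrow> T i j \<le> platform n lam \<beta> i)"
    if T: "T \<in> SSYT n lam" for T
  proof
    assume a: "\<forall>i j. in_shape n lam i j \<longrightarrow> T i j \<le> \<beta> i"
    show "\<forall>i j. in_shape n lam i j \<longrightarrow> T i j \<le> platform n lam \<beta> i"
    proof (intro allI impI)
      fix i j assume s: "in_shape n lam i j"
      hence "T i j \<le> \<beta> i" using a by blast
      moreover have "\<beta> i \<le> platform n lam \<beta> i" using ubp s unfolding in_shape_def by blast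
      ultimately show "T i j \<le> platform n lam \<beta> i" by simp
    qed
  next
    assume a: "\<forall>i j. in_shape n lam i j \<longrightarrow> T i j \<le> platform n lam \<beta> i"
    show "\<forall>i j. in_shape n lam i j \<longrightarrow> T i j \<le> \<beta> i"
    proof (intro allI impI)
      fix i j assume s: "in_shape n lam i j"
      hence i: "1 \<le> i" "i \<le> n" and j: "1 \<le> j" "j \<le> lam i" unfolding in_shape_def by auto
      let ?k = "xcrit n lam \<beta> i"
      have K: "i \<le> ?k" "?k \<le> n" using xcrit_props[OF i] lohi[OF i] by auto
      have lk: "lam ?k = lam i" using lam_const[OF i, of i] K by simp
      let ?c = "lam i"
      have "T i j \<le> T i ?c" by (rule SSYT_row_mono[OF T i j(1) j(2)]) simp
      moreover have "T i ?c + (?k - i) \<le> T ?k ?c" by (rule col_chain[OF T part i(1) K(1) K(2)]) (use j lk in auto)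
      moreover have "T ?k ?c \<le> platform n lam \<beta> ?k"
        using a K i j lk unfolding in_shape_def by auto
      moreover have "platform n lam \<beta> ?k = \<beta> ?k"
        using xcrit_const[OF i, of ?k] K unfolding xi_eq by simp
      moreover have "int (\<beta> ?k) - int (\<beta> i) \<le> int ?k - int i" using F2[OF i, of i] K by simp
      ultimately show "T i j \<le> \<beta> i" using K by linarith
    qed
  qed
  thus ?thesis unfolding Sb_def by blast
qed

definition bbf :: "nat \<Rightarrow> nat \<Rightarrow> nat" where
  "bbf p j = (if p \<le> j then platform n lam \<beta> j else \<beta> j)"

definition Amat :: "(nat \<Rightarrow> 'a::comm_ring_1) \<Rightarrow> nat \<Rightarrow> 'a mat" where
  "Amat x p = mat n n (\<lambda>(i,j). hcomp (int (lam (j+1)) - int (j+1) + int (i+1)) (i+1) (bbf p (j+1)) x)"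

lemma det_step:
  fixes x :: "nat \<Rightarrow> 'a::comm_ring_1"
  assumes p: "1 \<le> p" "p \<le> n"
  shows "det (Amat x (Suc p)) = det (Amat x p)"
proof -
  let ?k = "xcrit n lam \<beta> p"
  have K: "p \<le> ?k" "?k \<le> n" using xcrit_props[OF p] lohi[OF p] by auto
  show ?thesis
  proof (cases "?k = p")
    case True
    have "bbf (Suc p) = bbf p"
    proof
      fix j show "bbf (Suc p) j = bbf p j"
        unfolding bbf_def xi_eq using True by (cases "j = p") auto
    qed
    thus ?thesis unfolding Amat_def by simp
  next
    case False
    hence pk: "p < ?k" using K by simp
    have flat: "\<forall>j. p \<le> j \<and> j < ?k \<longrightarrow> lam (j+1) = lam j"
    proof (intro allI impI)
      fix j assume j: "p \<le> j \<and> j < ?k"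
      have "lam j = lam ?k" using lam_const[OF p, of j] j by simp
      moreover have "lam (j+1) = lam ?k" using lam_const[OF p, of "j+1"] j by simp
      ultimately show "lam (j+1) = lam j" by simp
    qed
    have kb: "?k \<le> \<beta> ?k" using up K p unfolding upper_tuple_def by auto
    have c1: "int (\<beta> ?k) - (int ?k - int p) \<le> int (\<beta> p)" using F2[OF p, of p] K by simp
    have c2: "\<beta> p \<le> \<beta> ?k" using ubp p unfolding xi_eq by blast
    obtain d where d: "d p = 1" "\<forall>i0. Vc lam x p (\<beta> p) i0 = (\<Sum>l\<in>{p..?k}. d l * Vc lam x l (\<beta> ?k) i0)"
      using SP[OF flat kb, of p "\<beta> p" x] K c1 c2 by auto
    define F where "F i j = hcomp (int (lam (j+1)) - int (j+1) + int (i+1)) (i+1) (bbf p (j+1)) x" for i j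
    have pn: "p - 1 < n" using p by simp
    have "Amat x (Suc p) = mat n n (\<lambda>(i,j). if j = p - 1 then (\<Sum>l\<in>{p..?k}. d l * Vc lam x l (\<beta> ?k) i) else F i j)"
    proof (rule eq_matI)
      fix i j assume ij: "i < dim_row (mat n n (\<lambda>(i,j). if j = p - 1 then (\<Sum>l\<in>{p..?k}. d l * Vc lam x l (\<beta> ?k) i) else F i j))"
        "j < dim_col (mat n n (\<lambda>(i,j). if j = p - 1 then (\<Sum>l\<in>{p..?k}. d l * Vc lam x l (\<beta> ?k) i) else F i j))"
      show "Amat x (Suc p) $$ (i, j) = mat n n (\<lambda>(i,j). if j = p - 1 then (\<Sum>l\<in>{p..?k}. d l * Vc lam x l (\<beta> ?k) i) else F i j) $$ (i, j)"
      proof (cases "j = p - 1")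
        case True
        hence "j + 1 = p" using p by simp
        thus ?thesis using ij True d(2)[rule_format, of i] unfolding Amat_def bbf_def Vc_def by (simp add: algebra_simps)
      next
        case False
        hence "j + 1 \<noteq> p" using p by simp
        thus ?thesis using ij False unfolding Amat_def bbf_def F_def by auto
      qed
    qed (auto simp: Amat_def)
    hence "det (Amat x (Suc p)) = (\<Sum>l\<in>{p..?k}. d l * det (mat n n (\<lambda>(i,j). if j = p - 1 then Vc lam x l (\<beta> ?k) i else F i j)))"
      using det_col_lin[of "{p..?k}" "p - 1" n d "\<lambda>l i. Vc lam x l (\<beta> ?k) i" F] pn by simp
    also have "\<dots> = d p * det (mat n n (\<lambda>(i,j). if j = p - 1 then Vc lam x p (\<beta> ?k) i else F i j))
         + (\<Sum>l\<in>{Suc p..?k}. d l * det (mat n n (\<lambda>(i,j). if j = p - 1 then Vc lam x l (\<beta> ?k) i else F i j)))"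
      using K by (simp add: sum.atLeast_Suc_atMost)
    also have "(\<Sum>l\<in>{Suc p..?k}. d l * det (mat n n (\<lambda>(i,j). if j = p - 1 then Vc lam x l (\<beta> ?k) i else F i j))) = 0"
    proof (rule sum.neutral, rule ballI)
      fix l assume l: "l \<in> {Suc p..?k}"
      have xl: "xcrit n lam \<beta> l = ?k" using xcrit_const[OF p, of l] l by simp
      have "det (mat n n (\<lambda>(i,j). if j = p - 1 then Vc lam x l (\<beta> ?k) i else F i j)) = 0"
      proof (rule det_ident_cols[of "p - 1" n "l - 1"])
        show "p - 1 < n" "l - 1 < n" "p - 1 \<noteq> l - 1" using l p K by auto
        fix i assume "i < n"
        have "l - 1 + 1 = l" using l by simp
        moreover have "bbf p l = \<beta> ?k" using l xl unfolding bbf_def xi_eq by simp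
        ultimately show "(if p - 1 = p - 1 then Vc lam x l (\<beta> ?k) i else F i (p - 1))
             = (if l - 1 = p - 1 then Vc lam x l (\<beta> ?k) i else F i (l - 1))"
          using l p unfolding F_def Vc_def by auto
      qed
      thus "d l * det (mat n n (\<lambda>(i,j). if j = p - 1 then Vc lam x l (\<beta> ?k) i else F i j)) = 0" by simp
    qed
    also have "mat n n (\<lambda>(i,j). if j = p - 1 then Vc lam x p (\<beta> ?k) i else F i j) = Amat x p"
    proof (rule eq_matI)
      fix i j assume ij: "i < dim_row (Amat x p)" "j < dim_col (Amat x p)"
      show "mat n n (\<lambda>(i,j). if j = p - 1 then Vc lam x p (\<beta> ?k) i else F i j) $$ (i, j) = Amat x p $$ (i, j)"
      proof (cases "j = p - 1")
        case True
        hence "j + 1 = p" using p by simp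
        thus ?thesis using ij True unfolding Amat_def bbf_def Vc_def xi_eq by (simp add: Amat_def algebra_simps)
      next
        case False
        thus ?thesis using ij unfolding Amat_def F_def by simp
      qed
    qed (auto simp: Amat_def)
    finally show ?thesis using d(1) by simp
  qed
qed

lemma det_all:
  fixes x :: "nat \<Rightarrow> 'a::comm_ring_1"
  shows "q \<le> n \<Longrightarrow> det (Amat x (n+1)) = det (Amat x (n+1-q))"
proof (induction q)
  case 0 thus ?case by simp
next
  case (Suc q)
  show ?case
  proof -
    have e: "n + 1 - q = Suc (n - q)" using Suc.prems by simp
    have "det (Amat x (Suc (n - q))) = det (Amat x (n - q))"
      by (rule det_step) (use Suc.prems in auto)
    thus ?thesis using Suc e by simp
  qed
qed

theorem main:
  fixes x :: "nat \<Rightarrow> 'a::comm_ring_1"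
  shows "row_bound_sum n lam \<beta> x =
         det (mat n n (\<lambda>(i, j). hcomp (int (lam (j+1)) - int (j+1) + int (i+1)) (i+1) (\<beta> (j+1)) x))"
proof -
  have "row_bound_sum n lam \<beta> x = row_bound_sum n lam (platform n lam \<beta>) x"
    unfolding rbs_Sb Sb_eq ..
  also have "\<dots> = hmat n (\<lambda>j. int (lam j) - int j) (platform n lam \<beta>) x"
  proof (rule FJT[OF part])
    show "\<forall>j. 1 \<le> j \<and> j \<le> n \<longrightarrow> j \<le> platform n lam \<beta> j \<and> platform n lam \<beta> j \<le> n"
      using xi_bounds unfolding xi_eq by blast
    show "\<forall>j. 1 \<le> j \<and> j < n \<longrightarrow> platform n lam \<beta> j \<le> platform n lam \<beta> (j+1)"
      using xi_mono unfolding xi_eq by blast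
  qed
  also have "\<dots> = det (Amat x 1)"
    unfolding hmat_def Amat_def bbf_def by (intro arg_cong[where f=det] eq_matI) auto
  also have "\<dots> = det (Amat x (n+1))" using det_all[of n x] by simp
  also have "Amat x (n+1) = mat n n (\<lambda>(i, j). hcomp (int (lam (j+1)) - int (j+1) + int (i+1)) (i+1) (\<beta> (j+1)) x)"
    unfolding Amat_def bbf_def by (intro eq_matI) auto
  finally show ?thesis .
qed

end


theorem corollary5p2:
  fixes n :: nat and lam \<beta> :: "nat \<Rightarrow> nat" and x :: "nat \<Rightarrow> 'a::comm_ring_1"
  assumes "1 \<le> n"
    and "is_partition n lam"
    and "upper_tuple n \<beta>"
    and "\<beta> \<in> UGC n lam \<inter> UBP n lam"
  shows "row_bound_sum n lam \<beta> x =
         det (mat n n (\<lambda>(i, j). hcomp (int (lam (j+1)) - int (j+1) + int (i+1)) (i+1) (\<beta> (j+1)) x))"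
proof (rule main)
  show "1 \<le> n" "is_partition n lam" "upper_tuple n \<beta>" using assms by auto
  show "flag_critical n lam \<beta>" using assms(4) unfolding UGC_def by simp
  show "\<forall>i. 1 \<le> i \<and> i \<le> n \<longrightarrow> \<beta> i \<le> platform n lam \<beta> i" using assms(4) unfolding UBP_def by simp
qed

end
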